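(* Let $G=(V,E,\omega)$ have all its edge weights in a unital subring $\mathbb{U}\subseteq\mathbb{W}$, let $S=\{v_1,\dots,v_m\}\in st_0(G)$, and suppose each vertex of $G$ lies on a branch in $\mathcal{B}_S(G)$ (so that $\mathcal{L}_S(G)$ is defined). Then $G$ and $\mathcal{L}_S(G)$ are spectrally equivalent and have the same nonzero spectrum. Moreover, if $|G|>m+\sum_{j=1}^m(|\beta^j|-2)$ then $\mathcal{L}_S(G)$ is a reduction of $G$ over $\mathbb{U}$; otherwise it is an expansion of $G$ over $\mathbb{U}$.
   Context: Let $\mathbb{W}$ be the field of rational functions in a complex variable $\lambda$ with complex coefficients; a unital subring is a subring containing $1$. A graph $G=(V,E,\omega)$ is a finite directed graph with vertex set $V$, edges $E$ (loops allowed, at most one edge from a vertex to another), weights $\omega:E\to\mathbb{W}\setminus\{0\}$ (weight $0$ for non-edges); $M(G)_{ij}=\omega(e_{ij})$; $|G|$ = number of vertices; the weight set is $\omega(E)$. The spectrum $\sigma(G)$ is the list of roots, with multiplicity, of the numerator of $\det(M(G)-\lambda I)$ written in lowest terms; "nonzero spectrum" means this list with all zeros removed. $\bar S=V\setminus S$; $\ell(G)$ is $G$ without loops. A path is a sequence of distinct vertices $u_1,\dots,u_k$ ($k\ge2$) with edges $u_t\to u_{t+1}$; a cycle is the same with $u_1=u_k$, $u_1,\dots,u_{k-1}$ distinct; $u_2,\dots,u_{k-1}$ are interior; $|\beta|=k$. A nonempty $S\subseteq V$ is a structural set ($S\in st(G)$) if $\ell(G)|_{\bar S}$ has no cycles and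 $\omega(e_{ii})\ne\lambda$ for $v_i\in\bar S$; $st_0(G)$ consists of those $S\in st(G)$ with $\omega(e_{ii})=0$ for all $v_i\in\bar S$. $\mathcal{B}_{ij}(G;S)$ is the set of paths or cycles from $v_i\in S$ to $v_j\in S$ with no interior vertex in $S$ (branches); $\mathcal{B}_S(G)$ is their union. $\mathcal{P}_\omega(u_1,\dots,u_k)=\omega(u_1u_2)\prod_{t=2}^{k-1}\frac{\omega(u_tu_{t+1})}{\lambda-\omega(u_tu_t)}$; $\mathcal{R}_S(G)$ is the graph on $S$ with an edge $v_i\to v_j$ iff $\mathcal{B}_{ij}(G;S)\ne\emptyset$, weight $\sum_{\beta\in\mathcal{B}_{ij}(G;S)}\mathcal{P}_\omega(\beta)$. Graphs $G,H$ are spectrally equivalent if $\mathcal{R}_S(G)=\mathcal{R}_T(H)$ for some $S\in st(G)$, $T\in st(H)$. If $G,H$ are spectrally equivalent with weight sets in $\mathbb{U}$, then $H$ is a reduction of $G$ over $\mathbb{U}$ if $|H|<|G|$ and an expansion of $G$ over $\mathbb{U}$ if $|H|\ge|G|$. $\mathcal{L}$-construction: for $S=\{v_1,\dots,v_m\}\in st_0(G)$ with every vertex of $G$ on a branch, for each $j$ choose a branch $\beta^j$ ending at $v_j$ of maximal length $|\beta^j|$ among branches in $\bigcup_i\mathcal{B}_{ij}(G;S)$. Build a graph $\tilde{\mathcal{X}}$ consisting of the vertices of $S$ together with, for each $j$, a separate new copy of the interior vertices of $\beta^j$ (pairwise disjoint for different $j$), forming a path $\beta^j_{\ell_j},\beta^j_{\ell_j-1},\dots,\beta^j_0$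 where $\ell_j=|\beta^j|-1$, $\beta^j_{\ell_j}\in S$ is the starting vertex of $\beta^j$ and $\beta^j_0=v_j$; give the edge $\beta^j_{\ell_j}\to\beta^j_{\ell_j-1}$ weight $\lambda^{|\beta^j|-2}\mathcal{P}_\omega(\beta^j)$ and all other edges of these paths weight $1$. Then, for each other branch $\gamma\in\mathcal{B}_{ij}(G;S)$, $\gamma\neq\beta^j$, add an edge from $v_i$ to $\beta^j_{|\gamma|-2}$ of weight $\lambda^{|\gamma|-2}\mathcal{P}_\omega(\gamma)$; parallel edges thus created are merged into one edge whose weight is the sum. The result is $\mathcal{L}_S(G)$; it has $m+\sum_{j}(|\beta^j|-2)$ vertices. *)

theory Defs
  imports "HOL-Computational_Algebra.Polynomial_Factorial"
          "HOL-Computational_Algebra.Normalized_Fraction"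
          "HOL-Computational_Algebra.Field_as_Ring"
          "HOL-Combinatorics.Permutations"
          "HOL-Library.Multiset"
begin

type_synonym rf = "complex poly fract"

definition lam :: rf where "lam = to_fract [:0, 1:]"

definition unital_subring :: "rf set \<Rightarrow> bool" where
  "unital_subring U \<longleftrightarrow> 1 \<in> U \<and> (\<forall>a\<in>U. \<forall>b\<in>U. a + b \<in> U \<and> a * b \<in> U \<and> - a \<in> U)"

record 'v graph =
  verts :: "'v set"
  arcs :: "('v \<times> 'v) set"
  wt :: "'v \<Rightarrow> 'v \<Rightarrow> rf"

definition wf_graph :: "('v, 'b) graph_scheme \<Rightarrow> bool" where
  "wf_graph G \<longleftrightarrow> finite (verts G) \<and> arcs G \<subseteq> verts G \<times> verts G
     \<and> (\<forall>i j. (i, j) \<in> arcs G \<longleftrightarrow> wt G i j \<noteq> 0)"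

definition weight_set :: "('v, 'b) graph_scheme \<Rightarrow> rf set" where
  "weight_set G = {wt G i j | i j. (i, j) \<in> arcs G}"

definition char_det :: "('v, 'b) graph_scheme \<Rightarrow> rf" where
  "char_det G = (\<Sum>p \<in> {p. p permutes verts G}. of_int (sign p) *
       (\<Prod>i \<in> verts G. wt G i (p i) - (if p i = i then lam else 0)))"

definition roots_mset :: "complex poly \<Rightarrow> complex multiset" where
  "roots_mset p = (\<Sum>x \<in> {x. poly p x = 0}. replicate_mset (order x p) x)"

definition spectrum_graph :: "('v, 'b) graph_scheme \<Rightarrow> complex multiset" where
  "spectrum_graph G = roots_mset (fst (quot_of_fract (char_det G)))"

definition nonzero_spectrum :: "('v, 'b) graph_scheme \<Rightarrow> complex multiset" where
  "nonzero_spectrum G = filter_mset (\<lambda>x. x \<noteq> 0) (spectrum_graph G)"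

definition is_edge :: "('v, 'b) graph_scheme \<Rightarrow> 'v \<Rightarrow> 'v \<Rightarrow> bool" where
  "is_edge G a b \<longleftrightarrow> (a, b) \<in> arcs G"

definition consec_edges :: "('v, 'b) graph_scheme \<Rightarrow> 'v list \<Rightarrow> bool" where
  "consec_edges G us \<longleftrightarrow> (\<forall>t. Suc t < length us \<longrightarrow> is_edge G (us ! t) (us ! Suc t))"

definition is_path :: "('v, 'b) graph_scheme \<Rightarrow> 'v list \<Rightarrow> bool" where
  "is_path G us \<longleftrightarrow> 2 \<le> length us \<and> distinct us \<and> set us \<subseteq> verts G \<and> consec_edges G us"

definition is_cycle :: "('v, 'b) graph_scheme \<Rightarrow> 'v list \<Rightarrow> bool" where
  "is_cycle G us \<longleftrightarrow> 2 \<le> length us \<and> hd us = last us \<and> distinct (butlast us)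
      \<and> set us \<subseteq> verts G \<and> consec_edges G us"

definition interior :: "'v list \<Rightarrow> 'v set" where
  "interior us = set (butlast (tl us))"

definition branches :: "('v, 'b) graph_scheme \<Rightarrow> 'v set \<Rightarrow> 'v \<Rightarrow> 'v \<Rightarrow> 'v list set" where
  "branches G S i j = {us. (is_path G us \<or> is_cycle G us) \<and> i \<in> S \<and> j \<in> S
      \<and> hd us = i \<and> last us = j \<and> interior us \<inter> S = {}}"

definition all_branches :: "('v, 'b) graph_scheme \<Rightarrow> 'v set \<Rightarrow> 'v list set" where
  "all_branches G S = (\<Union>i \<in> S. \<Union>j \<in> S. branches G S i j)"

definition path_weight :: "('v, 'b) graph_scheme \<Rightarrow> 'v list \<Rightarrow> rf" where
  "path_weight G us = wt G (us ! 0) (us ! 1) *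
     (\<Prod>t \<in> {1..<length us - 1}. wt G (us ! t) (us ! Suc t) / (lam - wt G (us ! t) (us ! t)))"

definition st :: "('v, 'b) graph_scheme \<Rightarrow> 'v set \<Rightarrow> bool" where
  "st G S \<longleftrightarrow> S \<noteq> {} \<and> S \<subseteq> verts G
     \<and> \<not> (\<exists>us. is_cycle G us \<and> 3 \<le> length us \<and> set us \<subseteq> verts G - S)
     \<and> (\<forall>i \<in> verts G - S. wt G i i \<noteq> lam)"

definition st0 :: "('v, 'b) graph_scheme \<Rightarrow> 'v set \<Rightarrow> bool" where
  "st0 G S \<longleftrightarrow> st G S \<and> (\<forall>i \<in> verts G - S. wt G i i = 0)"

definition isored :: "('v, 'b) graph_scheme \<Rightarrow> 'v set \<Rightarrow> 'v graph" where
  "isored G S =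
     \<lparr> verts = S,
       arcs = {(i, j). i \<in> S \<and> j \<in> S \<and> branches G S i j \<noteq> {}},
       wt = (\<lambda>i j. if i \<in> S \<and> j \<in> S \<and> branches G S i j \<noteq> {}
                    then (\<Sum>\<beta> \<in> branches G S i j. path_weight G \<beta>) else 0) \<rparr>"

definition spec_equiv :: "'v graph \<Rightarrow> 'v graph \<Rightarrow> bool" where
  "spec_equiv G H \<longleftrightarrow> (\<exists>S T. st G S \<and> st H T \<and> isored G S = isored H T)"

definition is_reduction :: "rf set \<Rightarrow> 'v graph \<Rightarrow> 'v graph \<Rightarrow> bool" where
  "is_reduction U G H \<longleftrightarrow> spec_equiv G H \<and> weight_set G \<subseteq> U \<and> weight_set H \<subseteq> U
      \<and> card (verts H) < card (verts G)"

definition is_expansion :: "rf set \<Rightarrow> 'v graph \<Rightarrow> 'v graph \<Rightarrow> bool" where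
  "is_expansion U G H \<longleftrightarrow> spec_equiv G H \<and> weight_set G \<subseteq> U \<and> weight_set H \<subseteq> U
      \<and> card (verts H) \<ge> card (verts G)"

text \<open>Copy of G on the vertex type 'v + ('v * nat) (vertices tagged Inl).\<close>
definition lift_graph :: "'v graph \<Rightarrow> ('v + 'v \<times> nat) graph" where
  "lift_graph G =
     \<lparr> verts = Inl ` verts G,
       arcs = (\<lambda>(a, b). (Inl a, Inl b)) ` arcs G,
       wt = (\<lambda>x y. case (x, y) of (Inl a, Inl b) \<Rightarrow> wt G a b | _ \<Rightarrow> 0) \<rparr>"

definition max_branch_choice :: "'v graph \<Rightarrow> 'v set \<Rightarrow> ('v \<Rightarrow> 'v list) \<Rightarrow> bool" where
  "max_branch_choice G S beta \<longleftrightarrow>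
     (\<forall>j \<in> S. beta j \<in> (\<Union>i \<in> S. branches G S i j)
        \<and> (\<forall>i \<in> S. \<forall>\<gamma> \<in> branches G S i j. length \<gamma> \<le> length (beta j)))"

text \<open>Vertex beta^j_k of the path beta^j_(l_j), ..., beta^j_0 with l_j = |beta^j| - 1:
  beta^j_0 = v_j, beta^j_(l_j) = start of beta^j, interior copies are the new vertices Inr (j, k).\<close>
definition Lnode :: "('v \<Rightarrow> 'v list) \<Rightarrow> 'v \<Rightarrow> nat \<Rightarrow> 'v + 'v \<times> nat" where
  "Lnode beta j k = (if k = 0 then Inl j
                     else if k = length (beta j) - 1 then Inl (hd (beta j)) else Inr (j, k))"

definition Lpath_arc :: "'v set \<Rightarrow> ('v \<Rightarrow> 'v list) \<Rightarrow> 'v \<Rightarrow> nat \<Rightarrow> bool" where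
  "Lpath_arc S beta j k \<longleftrightarrow> j \<in> S \<and> k < length (beta j) - 1"

definition Lcon :: "'v graph \<Rightarrow> 'v set \<Rightarrow> ('v \<Rightarrow> 'v list) \<Rightarrow> ('v + 'v \<times> nat) graph" where
  "Lcon G S beta =
    (let A = {(x, y). (\<exists>j k. Lpath_arc S beta j k \<and> x = Lnode beta j (Suc k) \<and> y = Lnode beta j k)
                  \<or> (\<exists>j \<in> S. \<exists>i \<in> S. \<exists>\<gamma> \<in> branches G S i j - {beta j}.
                        x = Inl i \<and> y = Lnode beta j (length \<gamma> - 2))};
         W = (\<lambda>x y.
              (\<Sum>j \<in> S. \<Sum>k \<in> {0..<length (beta j) - 1}.
                  if x = Lnode beta j (Suc k) \<and> y = Lnode beta j k
                  then (if Suc k = length (beta j) - 1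
                        then lam ^ (length (beta j) - 2) * path_weight G (beta j) else 1)
                  else 0)
            + (\<Sum>j \<in> S. \<Sum>i \<in> S. \<Sum>\<gamma> \<in> branches G S i j - {beta j}.
                  if x = Inl i \<and> y = Lnode beta j (length \<gamma> - 2)
                  then lam ^ (length \<gamma> - 2) * path_weight G \<gamma> else 0))
     in \<lparr> verts = Inl ` S \<union> {Inr (j, k) | j k. j \<in> S \<and> 1 \<le> k \<and> k < length (beta j) - 1},
          arcs = A,
          wt = (\<lambda>x y. if (x, y) \<in> A then W x y else 0) \<rparr>)"

end

theory Submission
  imports Defs "Jordan_Normal_Form.Determinant"
begin


definition mm :: "('a \<Rightarrow> 'a \<Rightarrow> rf) \<Rightarrow> 'a \<Rightarrow> 'a \<Rightarrow> rf" where
  "mm w x y = w x y - (if x = y then lam else 0)"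

definition cdet :: "'a set \<Rightarrow> ('a \<Rightarrow> 'a \<Rightarrow> rf) \<Rightarrow> rf" where
  "cdet V w = (\<Sum>p \<in> {p. p permutes V}. of_int (sign p) * (\<Prod>x \<in> V. mm w x (p x)))"

lemma char_det_cdet: "char_det G = cdet (verts G) (wt G)"
  unfolding char_det_def cdet_def mm_def
  by (intro sum.cong refl arg_cong2[where f="(*)"] prod.cong) auto

lemma cdet_cong:
  assumes "\<And>x y. x \<in> V \<Longrightarrow> y \<in> V \<Longrightarrow> w x y = w' x y"
  shows "cdet V w = cdet V w'"
  unfolding cdet_def mm_def
  by (intro sum.cong refl arg_cong2[where f="(*)"] prod.cong) (auto simp: assms permutes_in_image)

lemma cdet_det:
  assumes f: "bij_betw f {0..<n} V"
  shows "cdet V w = det (mat n n (\<lambda>(i,j). mm w (f i) (f j)))"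
proof -
  have finV: "finite V" using f bij_betw_finite by blast
  define \<phi> where "\<phi> = (\<lambda>q x. if x \<in> V then f (q (inv_into {0..<n} f x)) else x)"
  have bij: "bij_betw \<phi> {q. q permutes {0..<n}} {p. p permutes V}"
    unfolding \<phi>_def by (rule bij_betw_permutations[OF f])
  have "cdet V w = (\<Sum>q \<in> {q. q permutes {0..<n}}. of_int (sign (\<phi> q)) * (\<Prod>x \<in> V. mm w x (\<phi> q x)))"
    unfolding cdet_def by (rule sum.reindex_bij_betw[OF bij, symmetric])
  also have "\<dots> = (\<Sum>q \<in> {q. q permutes {0..<n}}. of_int (sign q) * (\<Prod>i \<in> {0..<n}. mm w (f i) (f (q i))))"
  proof (intro sum.cong refl)
    fix q assume q: "q \<in> {q. q permutes {0..<n}}"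
    have pb: "permutes_bij_finite q {0..<n} V f (inv_into {0..<n} f)"
      unfolding permutes_bij_finite_def permutes_bij_def permutes_bij_finite_axioms_def
      using q f by (auto simp: bij_betw_inv_into_left)
    have s: "sign (\<phi> q) = sign q" using permutes_bij_finite.sign_p'[OF pb] unfolding \<phi>_def .
    have "(\<Prod>x \<in> V. mm w x (\<phi> q x)) = (\<Prod>i \<in> {0..<n}. mm w (f i) (\<phi> q (f i)))"
      by (rule prod.reindex_bij_betw[OF f, symmetric])
    also have "\<dots> = (\<Prod>i \<in> {0..<n}. mm w (f i) (f (q i)))"
      by (intro prod.cong refl) (use f in \<open>auto simp: \<phi>_def bij_betw_inv_into_left bij_betw_apply\<close>)
    finally show "of_int (sign (\<phi> q)) * (\<Prod>x \<in> V. mm w x (\<phi> q x)) =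
        of_int (sign q) * (\<Prod>i \<in> {0..<n}. mm w (f i) (f (q i)))" using s by simp
  qed
  also have "\<dots> = det (mat n n (\<lambda>(i,j). mm w (f i) (f j)))"
    unfolding det_def' [OF mat_carrier]
    by (intro sum.cong refl arg_cong2[where f="(*)"] prod.cong)
       (auto simp: permutes_in_image)
  finally show ?thesis .
qed



lemma det_elim:
  fixes A :: "'a::field mat"
  assumes A: "A \<in> carrier_mat (Suc n) (Suc n)" and d: "A $$ (0,0) \<noteq> 0"
  shows "det A = A $$ (0,0) * det (mat n n (\<lambda>(i,j). A $$ (Suc i, Suc j) - A $$ (Suc i, 0) * A $$ (0, Suc j) / A $$ (0,0)))"
proof -
  define c where "c = (\<lambda>i. - A $$ (i, 0) / A $$ (0,0))"
  define E where "E = mat (Suc n) (Suc n) (\<lambda>(i,j). (if i = j then 1 else 0) + (if j = 0 \<and> i \<noteq> 0 then c i else 0))"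
  have E: "E \<in> carrier_mat (Suc n) (Suc n)" unfolding E_def by simp
  have detE: "det E = 1"
  proof -
    have "det E = prod_list (diag_mat E)"
      by (rule det_lower_triangular[OF _ E]) (auto simp: E_def)
    also have "\<dots> = 1" unfolding prod_list_diag_prod
      by (rule prod.neutral) (auto simp: E_def)
    finally show ?thesis .
  qed
  have EA: "(E * A) $$ (i,j) = A $$ (i,j) + (if i \<noteq> 0 then c i * A $$ (0, j) else 0)"
    if "i < Suc n" "j < Suc n" for i j
  proof -
    have "(E * A) $$ (i,j) = (\<Sum>k \<in> {0..<Suc n}. E $$ (i,k) * A $$ (k,j))"
      using that A E by (simp add: scalar_prod_def)
    also have "\<dots> = (\<Sum>k \<in> {0..<Suc n}. (if i = k then A $$ (k,j) else 0) + (if k = 0 \<and> i \<noteq> 0 then c i * A $$ (k,j) else 0))"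
      using that by (intro sum.cong refl) (auto simp: E_def algebra_simps)
    also have "\<dots> = A $$ (i,j) + (if i \<noteq> 0 then c i * A $$ (0, j) else 0)"
      using that by (simp add: sum.distrib)
    finally show ?thesis .
  qed
  define D where "D = mat n n (\<lambda>(i,j). A $$ (Suc i, Suc j) - A $$ (Suc i, 0) * A $$ (0, Suc j) / A $$ (0,0))"
  have blk: "E * A = four_block_mat (mat 1 1 (\<lambda>_. A $$ (0,0))) (mat 1 n (\<lambda>(_,j). A $$ (0, Suc j))) (0\<^sub>m n 1) D"
    (is "_ = ?B")
  proof (rule eq_matI)
    show "dim_row (E * A) = dim_row ?B" "dim_col (E * A) = dim_col ?B" using A E by (auto simp: D_def)
    fix i j assume ij: "i < dim_row ?B" "j < dim_col ?B"
    hence ij': "i < Suc n" "j < Suc n" by (auto simp: D_def)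
    show "(E * A) $$ (i,j) = ?B $$ (i,j)"
      unfolding EA[OF ij'] using ij' d
      by (cases i; cases j) (auto simp: D_def c_def field_simps)
  qed
  have "det (E * A) = det E * det A" by (rule det_mult[OF E A])
  hence "det A = det (E * A)" using detE by simp
  also have "\<dots> = det (mat 1 1 (\<lambda>_. A $$ (0,0))) * det D"
    unfolding blk by (rule det_four_block_mat_lower_left_zero_col) (auto simp: D_def)
  also have "det (mat 1 1 (\<lambda>_. A $$ (0,0))) = A $$ (0,0)"
    by (subst det_single) auto
  finally show ?thesis unfolding D_def .
qed

lemma cdet_elim:
  assumes V: "finite V" "v \<in> V" and d: "w v v \<noteq> lam"
  shows "cdet V w = (w v v - lam) * cdet (V - {v}) (\<lambda>a b. w a b - w a v * w v b / (w v v - lam))"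
proof -
  define n where "n = card (V - {v})"
  obtain g where g: "bij_betw g {0..<n} (V - {v})"
    using ex_bij_betw_nat_finite[of "V - {v}"] V unfolding n_def by auto
  define f where "f = (\<lambda>i. if i = 0 then v else g (i - 1))"
  have f: "bij_betw f {0..<Suc n} V"
  proof -
    have "f ` {0..<Suc n} = insert v (g ` {0..<n})"
    proof -
      have "{0..<Suc n} = insert 0 (Suc ` {0..<n})" by (rule atLeast0_lessThan_Suc_eq_insert_0)
      moreover have "f ` Suc ` {0..<n} = g ` {0..<n}" unfolding image_image by (simp add: f_def)
      ultimately show ?thesis by (simp only: image_insert) (simp add: f_def)
    qed
    also have "\<dots> = V" using g V by (auto simp: bij_betw_def)
    finally have im: "f ` {0..<Suc n} = V" .
    have gv: "\<And>i. i < n \<Longrightarrow> g i \<noteq> v" using g by (auto simp: bij_betw_def)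
    have "inj_on f {0..<Suc n}"
    proof (rule inj_onI)
      fix x y assume xy: "x \<in> {0..<Suc n}" "y \<in> {0..<Suc n}" "f x = f y"
      show "x = y"
      proof (cases "x = 0"; cases "y = 0")
        assume "x \<noteq> 0" "y \<noteq> 0"
        hence "g (x - 1) = g (y - 1)" "x - 1 \<in> {0..<n}" "y - 1 \<in> {0..<n}" using xy by (auto simp: f_def)
        hence "x - 1 = y - 1" using g by (auto simp: bij_betw_def inj_on_def)
        thus ?thesis using \<open>x \<noteq> 0\<close> \<open>y \<noteq> 0\<close> by simp
      qed (use xy gv in \<open>auto simp: f_def, metis Suc_pred less_Suc_eq_0_disj not_less_eq\<close>)
    qed
    with im show ?thesis by (auto simp: bij_betw_def)
  qed
  have "cdet V w = det (mat (Suc n) (Suc n) (\<lambda>(i,j). mm w (f i) (f j)))"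
    by (rule cdet_det[OF f])
  also have "\<dots> = mm w v v * det (mat n n (\<lambda>(i,j). mm (\<lambda>a b. w a b - w a v * w v b / (w v v - lam)) (g i) (g j)))"
  proof -
    define M where "M = mat (Suc n) (Suc n) (\<lambda>(i, j). mm w (f i) (f j))"
    have eq: "mat n n (\<lambda>(i, j). M $$ (Suc i, Suc j) - M $$ (Suc i, 0) * M $$ (0, Suc j) / M $$ (0, 0))
      = mat n n (\<lambda>(i,j). mm (\<lambda>a b. w a b - w a v * w v b / (w v v - lam)) (g i) (g j))"
    proof (rule eq_matI, goal_cases)
      case (1 i j)
      hence "g i \<noteq> v" "g j \<noteq> v" "i < n" "j < n" using g by (auto simp: bij_betw_def)
      thus ?case by (auto simp: mm_def f_def M_def)
    qed auto
    have "det M = M $$ (0,0) * det (mat n n (\<lambda>(i, j). M $$ (Suc i, Suc j) - M $$ (Suc i, 0) * M $$ (0, Suc j) / M $$ (0, 0)))"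
      by (rule det_elim) (auto simp: M_def mm_def d f_def)
    thus ?thesis unfolding eq by (simp add: M_def f_def)
  qed
  also have "det (mat n n (\<lambda>(i,j). mm (\<lambda>a b. w a b - w a v * w v b / (w v v - lam)) (g i) (g j))) = cdet (V - {v}) (\<lambda>a b. w a b - w a v * w v b / (w v v - lam))"
    by (rule cdet_det[OF g, symmetric])
  finally show ?thesis by (simp add: mm_def)
qed



lemma lam_nz: "lam \<noteq> 0"
  unfolding lam_def by simp

fun wp :: "('a \<Rightarrow> 'a \<Rightarrow> rf) \<Rightarrow> 'a list \<Rightarrow> rf" where
  "wp w (x # y # zs) = w x y * wp w (y # zs)"
| "wp w _ = 1"

definition dls :: "'a set \<Rightarrow> 'a list set" where
  "dls A = {xs. set xs \<subseteq> A \<and> distinct xs}"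

definition bws :: "'a set \<Rightarrow> 'a set \<Rightarrow> ('a \<Rightarrow> 'a \<Rightarrow> rf) \<Rightarrow> 'a \<Rightarrow> 'a \<Rightarrow> rf" where
  "bws V T w i j = (\<Sum>xs \<in> dls (V - T). wp w (i # xs @ [j]) / lam ^ length xs)"

definition wcyc :: "('a \<Rightarrow> 'a \<Rightarrow> rf) \<Rightarrow> 'a set \<Rightarrow> 'a list \<Rightarrow> bool" where
  "wcyc w D cs \<longleftrightarrow> 3 \<le> length cs \<and> hd cs = last cs \<and> distinct (butlast cs) \<and> set cs \<subseteq> D
      \<and> (\<forall>t. Suc t < length cs \<longrightarrow> w (cs ! t) (cs ! Suc t) \<noteq> 0)"

lemma finite_dls: "finite A \<Longrightarrow> finite (dls A)"
  unfolding dls_def by (rule finite_subset_distinct)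

lemma wp_Cons: "ys \<noteq> [] \<Longrightarrow> wp w (x # ys) = w x (hd ys) * wp w ys"
  by (cases ys) auto

lemma wp_zero: "w a b = 0 \<Longrightarrow> wp w (as @ a # b # bs) = 0"
proof (induction as)
  case Nil thus ?case by simp
next
  case (Cons x as) thus ?case by (cases as) auto
qed

lemma wp_cong_src: "(\<And>x b. x \<in> set xs \<Longrightarrow> w' x b = w x b) \<Longrightarrow> wp w' (xs @ [j]) = wp w (xs @ [j])"
proof (induction xs)
  case Nil thus ?case by simp
next
  case (Cons x xs) thus ?case by (cases xs) auto
qed

lemma source_exists:
  assumes fin: "finite D" and ne: "D \<noteq> {}" and loop: "\<forall>x\<in>D. w x x = 0"
    and acyc: "\<not> (\<exists>cs. wcyc w D cs)"
  shows "\<exists>v\<in>D. \<forall>x\<in>D. w x v = 0"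
proof (rule ccontr)
  assume "\<not> ?thesis"
  hence H: "\<forall>v\<in>D. \<exists>x\<in>D. w x v \<noteq> 0" by blast
  define P where "P = (\<lambda>v. SOME x. x \<in> D \<and> w x v \<noteq> 0)"
  have P: "P v \<in> D \<and> w (P v) v \<noteq> 0" if "v \<in> D" for v
    unfolding P_def by (rule someI_ex) (use H that in blast)
  obtain v0 where v0: "v0 \<in> D" using ne by blast
  define f where "f = (\<lambda>n. (P ^^ n) v0)"
  have fD: "f n \<in> D" for n by (induction n) (auto simp: f_def v0 P)
  have fS: "f (Suc n) = P (f n)" for n by (simp add: f_def)
  have fw: "w (f (Suc n)) (f n) \<noteq> 0" for n using P[OF fD[of n]] fS by simp
  have "\<not> inj_on f {..card D}"
  proof
    assume "inj_on f {..card D}"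
    hence "card (f ` {..card D}) = Suc (card D)" by (simp add: card_image)
    moreover have "card (f ` {..card D}) \<le> card D"
      by (rule card_mono[OF fin]) (auto simp: fD)
    ultimately show False by simp
  qed
  then obtain a b where ab: "a \<noteq> b" "f a = f b" unfolding inj_on_def by blast
  have ex: "\<exists>n. \<exists>m<n. f m = f n"
    using ab by (cases "a < b") (auto, metis linorder_neqE_nat)
  define N where "N = (LEAST n. \<exists>m<n. f m = f n)"
  have "\<exists>m<N. f m = f N" unfolding N_def by (rule LeastI_ex[OF ex])
  then obtain m where m: "m < N" "f m = f N" by blast
  have inj: "a = b" if "a < N" "b < N" "f a = f b" for a b
  proof (rule ccontr)
    assume "a \<noteq> b"
    have "\<exists>m<max a b. f m = f (max a b)"
    proof (cases "a < b")
      case True thus ?thesis using that by (auto simp: max_def intro!: exI[of _ a])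
    next
      case False thus ?thesis using that \<open>a \<noteq> b\<close> by (auto simp: max_def intro!: exI[of _ b])
    qed
    hence "N \<le> max a b" unfolding N_def by (rule Least_le)
    thus False using that by simp
  qed
  have "N - m \<noteq> 1"
  proof
    assume "N - m = 1"
    hence "N = Suc m" using m by simp
    thus False using fw[of m] m loop fD by auto
  qed
  hence Nm: "N - m \<ge> 2" using m by simp
  define cs where "cs = map (\<lambda>t. f (N - t)) [0..<N - m + 1]"
  have len: "length cs = N - m + 1" by (simp add: cs_def)
  have nth: "cs ! t = f (N - t)" if "t < N - m + 1" for t using that unfolding cs_def by (subst nth_map) (simp_all del: upt_Suc)
  have "wcyc w D cs"
    unfolding wcyc_def
  proof (intro conjI allI impI)
    show "3 \<le> length cs" using len Nm by simp
    have ne: "cs \<noteq> []" using len by auto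
    have "hd cs = f N" using nth[of 0] ne by (simp add: hd_conv_nth)
    moreover have "last cs = f (N - (N - m))" using nth[of "N - m"] ne len by (simp add: last_conv_nth)
    moreover have "N - (N - m) = m" using m by simp
    ultimately show "hd cs = last cs" using m by simp
    have bl: "butlast cs = map (\<lambda>t. f (N - t)) [0..<N - m]"
    proof -
      have "[0..<N - m + 1] = [0..<N - m] @ [N - m]" by simp
      thus ?thesis unfolding cs_def by (simp only: map_append butlast_snoc) simp
    qed
    show "distinct (butlast cs)"
      unfolding bl distinct_map
    proof
      show "inj_on (\<lambda>t. f (N - t)) (set [0..<N - m])"
      proof (rule inj_onI)
        fix t1 t2 assume t: "t1 \<in> set [0..<N - m]" "t2 \<in> set [0..<N - m]" "f (N - t1) = f (N - t2)"
        show "t1 = t2"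
        proof (cases "t1 = 0"; cases "t2 = 0")
          assume "t1 \<noteq> 0" "t2 \<noteq> 0"
          thus ?thesis using inj[of "N - t1" "N - t2"] t by auto
        next
          assume "t1 = 0" "t2 \<noteq> 0"
          thus ?thesis using inj[of m "N - t2"] t m by auto
        next
          assume "t1 \<noteq> 0" "t2 = 0"
          thus ?thesis using inj[of m "N - t1"] t m by auto
        qed simp
      qed
    qed simp
    show "set cs \<subseteq> D" by (auto simp: cs_def fD)
    fix t assume t: "Suc t < length cs"
    hence "N - t = Suc (N - Suc t)" using len m by simp
    thus "w (cs ! t) (cs ! Suc t) \<noteq> 0" using nth[of t] nth[of "Suc t"] t len fw[of "N - Suc t"] by simp
  qed
  thus False using acyc by blast
qed



lemma bws_elim:
  assumes fin: "finite V" and T: "T \<subseteq> V" and v: "v \<in> V - T"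
    and src: "\<forall>x\<in>V - T. w x v = 0"
    and i: "i \<in> T" and j: "j \<in> T"
  shows "bws (V - {v}) T (\<lambda>a b. w a b - w a v * w v b / (w v v - lam)) i j = bws V T w i j"
proof -
  define D where "D = V - T"
  define w' where "w' = (\<lambda>a b. w a b - w a v * w v b / (w v v - lam))"
  have vv: "w v v = 0" using src v by auto
  have D': "V - {v} - T = D - {v}" by (auto simp: D_def)
  have finD: "finite D" using fin by (simp add: D_def)
  define F where "F = (\<lambda>xs. wp w (i # xs @ [j]) / lam ^ length xs)"
  have w'src: "w' x b = w x b" if "x \<in> D" for x b using src that by (simp add: w'_def D_def)
  have exp: "wp w' (i # xs @ [j]) / lam ^ length xs = F xs + F (v # xs)" if xs: "xs \<in> dls (D - {v})" for xs
  proof -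
    have "wp w' (i # xs @ [j]) = w' i (hd (xs @ [j])) * wp w' (xs @ [j])" by (simp add: wp_Cons)
    also have "wp w' (xs @ [j]) = wp w (xs @ [j])"
      by (rule wp_cong_src) (use xs w'src in \<open>auto simp: dls_def\<close>)
    also have "w' i (hd (xs @ [j])) = w i (hd (xs @ [j])) + w i v * w v (hd (xs @ [j])) / lam"
      by (simp add: w'_def vv)
    finally have "wp w' (i # xs @ [j]) = wp w (i # xs @ [j]) + wp w (i # v # xs @ [j]) / lam"
      by (simp add: wp_Cons algebra_simps)
    thus ?thesis unfolding F_def using lam_nz by (simp add: field_simps)
  qed
  have "bws (V - {v}) T w' i j = (\<Sum>xs \<in> dls (D - {v}). F xs + F (v # xs))"
    unfolding bws_def D' by (intro sum.cong refl exp)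
  also have "\<dots> = (\<Sum>xs \<in> dls (D - {v}). F xs) + (\<Sum>xs \<in> dls (D - {v}). F (v # xs))"
    by (rule sum.distrib)
  also have "(\<Sum>xs \<in> dls (D - {v}). F (v # xs)) = (\<Sum>xs \<in> Cons v ` dls (D - {v}). F xs)"
    by (rule sum.reindex[symmetric, unfolded comp_def]) (auto simp: inj_on_def)
  also have "\<dots> = (\<Sum>xs \<in> dls D - dls (D - {v}). F xs)"
  proof (rule sum.mono_neutral_left)
    show "finite (dls D - dls (D - {v}))" using finite_dls[OF finD] by simp
    show "Cons v ` dls (D - {v}) \<subseteq> dls D - dls (D - {v})" using v by (auto simp: dls_def D_def)
    show "\<forall>xs \<in> dls D - dls (D - {v}) - Cons v ` dls (D - {v}). F xs = 0"
    proof
      fix xs assume xs: "xs \<in> dls D - dls (D - {v}) - Cons v ` dls (D - {v})"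
      hence vin: "v \<in> set xs" and xsD: "set xs \<subseteq> D" "distinct xs" by (auto simp: dls_def)
      then obtain ys zs where yz: "xs = ys @ v # zs" by (meson split_list)
      have "ys \<noteq> []"
      proof
        assume "ys = []"
        hence "xs = v # zs" "zs \<in> dls (D - {v})" using yz xsD by (auto simp: dls_def)
        thus False using xs by auto
      qed
      then obtain ys' y where ys: "ys = ys' @ [y]" by (metis rev_exhaust)
      have "y \<in> D" using xsD yz ys by auto
      hence "w y v = 0" using src by (simp add: D_def)
      hence "wp w ((i # ys') @ y # v # (zs @ [j])) = 0" by (rule wp_zero)
      thus "F xs = 0" unfolding F_def yz ys by simp
    qed
  qed
  also have "(\<Sum>xs \<in> dls (D - {v}). F xs) + (\<Sum>xs \<in> dls D - dls (D - {v}). F xs) = (\<Sum>xs \<in> dls D. F xs)"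
    by (subst add.commute, rule sum.subset_diff[symmetric]) (use finite_dls[OF finD] in \<open>auto simp: dls_def\<close>)
  also have "\<dots> = bws V T w i j" unfolding bws_def F_def D_def ..
  finally show ?thesis unfolding w'_def .
qed

theorem reduce_det:
  assumes "finite V" "T \<subseteq> V" "\<forall>x\<in>V - T. w x x = 0" "\<not> (\<exists>cs. wcyc w (V - T) cs)"
  shows "cdet V w = (- lam) ^ card (V - T) * cdet T (bws V T w)"
  using assms
proof (induction "card (V - T)" arbitrary: V w)
  case 0
  hence VT: "V = T" by auto
  have "bws V T w i j = w i j" for i j
  proof -
    have "dls (T - T) = {[]}" by (auto simp: dls_def)
    thus ?thesis unfolding bws_def VT by simp
  qed
  thus ?case using VT by simp
next
  case (Suc k)
  hence ne: "V - T \<noteq> {}" by auto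
  obtain v where v: "v \<in> V - T" and src: "\<forall>x\<in>V - T. w x v = 0"
    using source_exists[of "V - T" w] Suc.prems ne by auto
  have vv: "w v v = 0" using src v by auto
  have cardk: "card (V - {v} - T) = k"
  proof -
    have "V - {v} - T = V - T - {v}" by auto
    thus ?thesis using card_Diff_singleton[of v "V - T"] v Suc.prems(1) Suc.hyps(2) by simp
  qed
  define w' where "w' = (\<lambda>a b. w a b - w a v * w v b / (w v v - lam))"
  have w'src: "w' x b = w x b" if "x \<in> V - T" for x b using src that by (simp add: w'_def)
  have "cdet V w = (w v v - lam) * cdet (V - {v}) w'"
    unfolding w'_def by (rule cdet_elim) (use Suc.prems v vv lam_nz in auto)
  also have "cdet (V - {v}) w' = (- lam) ^ card (V - {v} - T) * cdet T (bws (V - {v}) T w')"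
  proof (rule Suc.hyps)
    show "k = card (V - {v} - T)" using cardk by simp
    show "finite (V - {v})" using Suc.prems by simp
    show "T \<subseteq> V - {v}" using Suc.prems v by auto
    show "\<forall>x\<in>V - {v} - T. w' x x = 0" using Suc.prems w'src by auto
    show "\<not> (\<exists>cs. wcyc w' (V - {v} - T) cs)"
    proof
      assume "\<exists>cs. wcyc w' (V - {v} - T) cs"
      then obtain cs where cs: "wcyc w' (V - {v} - T) cs" by blast
      have "wcyc w (V - T) cs" using cs unfolding wcyc_def
      proof (intro conjI allI impI; (elim conjE)?)
        fix t assume "Suc t < length cs" "\<forall>t. Suc t < length cs \<longrightarrow> w' (cs ! t) (cs ! Suc t) \<noteq> 0"
          "set cs \<subseteq> V - {v} - T"
        note h = this
        have "cs ! t \<in> set cs" using h(1) by simp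
        hence "cs ! t \<in> V - T" using h(3) by blast
        thus "w (cs ! t) (cs ! Suc t) \<noteq> 0" using w'src[of "cs ! t" "cs ! Suc t"] h(1,2) by metis
      qed auto
      thus False using Suc.prems by blast
    qed
  qed
  also have "cdet T (bws (V - {v}) T w') = cdet T (bws V T w)"
    by (rule cdet_cong) (unfold w'_def, rule bws_elim, use Suc.prems v src in auto)
  also note cardk
  finally show ?case using vv Suc.hyps(2)[symmetric] by simp
qed



lemma wp_prod: "wp w us = (\<Prod>t \<in> {0..<length us - 1}. w (us ! t) (us ! Suc t))"
proof (induction w us rule: wp.induct)
  case (1 w x y zs)
  have l: "length (x # y # zs) - 1 = Suc (length (y # zs) - 1)" by simp
  show ?case unfolding wp.simps 1 l prod.atLeast0_lessThan_Suc_shift by (simp add: comp_def)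
qed auto

lemma wp_nz: "wp w us \<noteq> 0 \<longleftrightarrow> (\<forall>t. Suc t < length us \<longrightarrow> w (us ! t) (us ! Suc t) \<noteq> 0)"
  unfolding wp_prod by (auto simp: prod_zero_iff)

lemma path_weight_eq:
  assumes "\<forall>x\<in>set xs. wt H x x = 0"
  shows "path_weight H (i # xs @ [j]) = wp (wt H) (i # xs @ [j]) / lam ^ length xs"
proof -
  define us where "us = i # xs @ [j]"
  have len: "length us - 1 = Suc (length xs)" by (simp add: us_def)
  have loop: "wt H (us ! t) (us ! t) = 0" if "t \<in> {1..<Suc (length xs)}" for t
  proof -
    have "us ! t = xs ! (t - 1)" using that by (auto simp: us_def nth_append nth_Cons split: nat.splits)
    moreover have "xs ! (t - 1) \<in> set xs" using that by auto
    ultimately show ?thesis using assms by auto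
  qed
  have "path_weight H us = wt H (us ! 0) (us ! 1) *
     (\<Prod>t \<in> {1..<Suc (length xs)}. wt H (us ! t) (us ! Suc t) / lam)"
    unfolding path_weight_def len by (intro arg_cong2[where f="(*)"] refl prod.cong) (auto simp: loop)
  also have "\<dots> = wt H (us ! 0) (us ! 1) * (\<Prod>t \<in> {1..<Suc (length xs)}. wt H (us ! t) (us ! Suc t)) / lam ^ length xs"
    by (simp add: prod_dividef)
  also have "wt H (us ! 0) (us ! 1) * (\<Prod>t \<in> {1..<Suc (length xs)}. wt H (us ! t) (us ! Suc t))
      = (\<Prod>t \<in> {0..<Suc (length xs)}. wt H (us ! t) (us ! Suc t))"
  proof -
    have "{0..<Suc (length xs)} = insert 0 {1..<Suc (length xs)}" by auto
    thus ?thesis by simp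
  qed
  also have "\<dots> = wp (wt H) us" unfolding wp_prod len ..
  finally show ?thesis unfolding us_def .
qed

lemma branches_char:
  assumes T: "T \<subseteq> verts H" and i: "i \<in> T" and j: "j \<in> T"
  shows "branches H T i j = (\<lambda>xs. i # xs @ [j]) ` {xs \<in> dls (verts H - T). consec_edges H (i # xs @ [j])}"
proof (rule Set.set_eqI, rule iffI)
  fix us assume us: "us \<in> branches H T i j"
  hence len: "2 \<le> length us" and hd: "hd us = i" and last: "last us = j"
    and int: "interior us \<inter> T = {}" and sub: "set us \<subseteq> verts H" and ce: "consec_edges H us"
    and dist: "distinct (butlast us)"
    by (auto simp: branches_def is_path_def is_cycle_def distinct_butlast)
  define xs where "xs = butlast (tl us)"
  have eq: "us = i # xs @ [j]"
  proof -
    obtain a r where r: "us = a # r" using len by (cases us) auto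
    have "r \<noteq> []" using len r by auto
    hence "r = butlast r @ [last r]" by simp
    thus ?thesis using r hd last \<open>r \<noteq> []\<close> by (simp add: xs_def) (metis append_butlast_last_id)
  qed
  have "interior us = set xs" by (simp add: interior_def xs_def)
  hence "xs \<in> dls (verts H - T)" using int sub dist eq by (auto simp: dls_def)
  thus "us \<in> (\<lambda>xs. i # xs @ [j]) ` {xs \<in> dls (verts H - T). consec_edges H (i # xs @ [j])}"
    using eq ce by auto
next
  fix us assume "us \<in> (\<lambda>xs. i # xs @ [j]) ` {xs \<in> dls (verts H - T). consec_edges H (i # xs @ [j])}"
  then obtain xs where xs: "xs \<in> dls (verts H - T)" "consec_edges H (i # xs @ [j])" and us: "us = i # xs @ [j]"
    by auto
  have int: "interior us = set xs" by (simp add: interior_def us)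
  have sub: "set us \<subseteq> verts H" using xs T i j by (auto simp: us dls_def)
  have "is_path H us \<or> is_cycle H us"
  proof (cases "i = j")
    case True
    thus ?thesis using xs sub i by (auto simp: is_cycle_def us dls_def butlast_append)
  next
    case False
    thus ?thesis using xs sub i j by (auto simp: is_path_def us dls_def)
  qed
  thus "us \<in> branches H T i j" unfolding branches_def using int xs i j by (auto simp: us dls_def)
qed

lemma branch_sum:
  assumes fin: "finite (verts H)" and T: "T \<subseteq> verts H" and i: "i \<in> T" and j: "j \<in> T"
    and loop: "\<forall>x\<in>verts H - T. wt H x x = 0"
    and arc: "\<forall>x y. wt H x y \<noteq> 0 \<longrightarrow> (x, y) \<in> arcs H"
  shows "(\<Sum>\<beta> \<in> branches H T i j. path_weight H \<beta>) = bws (verts H) T (wt H) i j"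
proof -
  define X where "X = {xs \<in> dls (verts H - T). consec_edges H (i # xs @ [j])}"
  have "(\<Sum>\<beta> \<in> branches H T i j. path_weight H \<beta>) = (\<Sum>xs \<in> X. path_weight H (i # xs @ [j]))"
    unfolding branches_char[OF T i j] X_def[symmetric]
    by (rule sum.reindex[unfolded comp_def]) (auto simp: inj_on_def)
  also have "\<dots> = (\<Sum>xs \<in> X. wp (wt H) (i # xs @ [j]) / lam ^ length xs)"
    by (intro sum.cong refl path_weight_eq) (use loop in \<open>auto simp: X_def dls_def\<close>)
  also have "\<dots> = bws (verts H) T (wt H) i j"
    unfolding bws_def
  proof (rule sum.mono_neutral_left)
    show "finite (dls (verts H - T))" using fin by (simp add: finite_dls)
    show "X \<subseteq> dls (verts H - T)" by (auto simp: X_def)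
    show "\<forall>xs\<in>dls (verts H - T) - X. wp (wt H) (i # xs @ [j]) / lam ^ length xs = 0"
    proof
      fix xs assume "xs \<in> dls (verts H - T) - X"
      hence "\<not> consec_edges H (i # xs @ [j])" by (auto simp: X_def)
      hence "wp (wt H) (i # xs @ [j]) = 0" using arc unfolding consec_edges_def is_edge_def
        by (subst not_not[symmetric], subst wp_nz) blast
      thus "wp (wt H) (i # xs @ [j]) / lam ^ length xs = 0" by simp
    qed
  qed
  finally show ?thesis .
qed

lemma isored_wt:
  assumes "finite (verts H)" "T \<subseteq> verts H" "x \<in> T" "y \<in> T"
    "\<forall>x\<in>verts H - T. wt H x x = 0" "\<forall>x y. wt H x y \<noteq> 0 \<longrightarrow> (x, y) \<in> arcs H"
  shows "wt (isored H T) x y = bws (verts H) T (wt H) x y"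
  using branch_sum[OF assms(1,2,3,4,5,6)] assms(3,4) by (auto simp: isored_def)

lemma verts_isored[simp]: "verts (isored H T) = T" by (simp add: isored_def)

lemma char_det_red:
  assumes fin: "finite (verts H)" and st: "st H T"
    and loop: "\<forall>x\<in>verts H - T. wt H x x = 0"
    and arc: "\<forall>x y. wt H x y \<noteq> 0 \<longrightarrow> (x, y) \<in> arcs H"
  shows "char_det H = (- lam) ^ card (verts H - T) * char_det (isored H T)"
proof -
  have T: "T \<subseteq> verts H" using st by (simp add: st_def)
  have nc: "\<not> (\<exists>cs. wcyc (wt H) (verts H - T) cs)"
  proof
    assume "\<exists>cs. wcyc (wt H) (verts H - T) cs"
    then obtain cs where cs: "wcyc (wt H) (verts H - T) cs" by blast
    hence "is_cycle H cs \<and> 3 \<le> length cs \<and> set cs \<subseteq> verts H - T"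
      using arc by (auto simp: wcyc_def is_cycle_def consec_edges_def is_edge_def)
    thus False using st by (auto simp: st_def)
  qed
  have "char_det H = (- lam) ^ card (verts H - T) * cdet T (bws (verts H) T (wt H))"
    unfolding char_det_cdet by (rule reduce_det[OF fin T loop nc])
  also have "cdet T (bws (verts H) T (wt H)) = char_det (isored H T)"
    unfolding char_det_cdet verts_isored
    by (rule cdet_cong, subst isored_wt[OF fin T _ _ loop arc], simp_all)
  finally show ?thesis .
qed



lemma lift_wt[simp]: "wt (lift_graph G) (Inl a) (Inl b) = wt G a b"
  by (simp add: lift_graph_def)
lemma lift_wt2[simp]: "wt (lift_graph G) (Inr a) y = 0" "wt (lift_graph G) x (Inr b) = 0"
  by (auto simp: lift_graph_def split: sum.splits)
lemma lift_verts[simp]: "verts (lift_graph G) = Inl ` verts G" by (simp add: lift_graph_def)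
lemma lift_arc[simp]: "((Inl a, Inl b) \<in> arcs (lift_graph G)) = ((a, b) \<in> arcs G)"
  by (auto simp: lift_graph_def)
lemma lift_arc2[simp]: "(Inr a, y) \<notin> arcs (lift_graph G)" "(x, Inr b) \<notin> arcs (lift_graph G)"
  by (auto simp: lift_graph_def)

lemma lift_consec: "consec_edges (lift_graph G) (map Inl us) = consec_edges G us"
  by (simp add: consec_edges_def is_edge_def)

lemma lift_path: "is_path (lift_graph G) (map Inl us) = is_path G us"
  by (auto simp: is_path_def lift_consec distinct_map)

lemma lift_cycle: "is_cycle (lift_graph G) (map Inl us) = is_cycle G us"
proof (cases "us = []")
  case False thus ?thesis by (auto simp: is_cycle_def lift_consec distinct_map hd_map last_map map_butlast[symmetric])
qed (simp add: is_cycle_def)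

lemma lift_interior: "interior (map Inl us) = Inl ` interior us"
  by (simp add: interior_def map_butlast[symmetric] map_tl[symmetric])

lemma map_projl_Inl: "set us \<subseteq> range Inl \<Longrightarrow> us = map Inl (map projl us)"
  by (induction us) auto

lemma lift_wf:
  assumes "wf_graph G"
  shows "\<forall>x y. wt (lift_graph G) x y \<noteq> 0 \<longrightarrow> (x, y) \<in> arcs (lift_graph G)"
  using assms by (auto simp: wf_graph_def split: sum.splits) (case_tac x; case_tac y; auto)+

lemma lift_branch_mem:
  assumes "vs \<noteq> []"
  shows "(map Inl vs \<in> branches (lift_graph G) (Inl ` S) (Inl i) (Inl j)) = (vs \<in> branches G S i j)"
proof -
  have "(interior (map Inl vs) \<inter> Inl ` S = {}) = (interior vs \<inter> S = {})"
    unfolding lift_interior by auto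
  thus ?thesis using assms unfolding branches_def mem_Collect_eq lift_path lift_cycle
    by (auto simp: hd_map last_map)
qed

lemma lift_branches:
  fixes G :: "'v graph"
  shows "branches (lift_graph G) (Inl ` S) (Inl i) (Inl j) = map Inl ` branches G S i j"
proof (rule Set.set_eqI, rule iffI)
  fix us :: "('v + 'v \<times> nat) list" assume us: "us \<in> branches (lift_graph G) (Inl ` S) (Inl i) (Inl j)"
  hence "set us \<subseteq> Inl ` verts G" by (auto simp: branches_def is_path_def is_cycle_def)
  hence eq: "us = map Inl (map projl us)" by (intro map_projl_Inl) auto
  define vs where "vs = map projl us"
  have ne: "vs \<noteq> []" using us by (auto simp: branches_def is_path_def is_cycle_def vs_def)
  have "vs \<in> branches G S i j"
    using us lift_branch_mem[OF ne] eq[folded vs_def] by metis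
  thus "us \<in> map Inl ` branches G S i j" using eq[folded vs_def] by auto
next
  fix us :: "('v + 'v \<times> nat) list" assume "us \<in> map Inl ` branches G S i j"
  then obtain vs where vs: "vs \<in> branches G S i j" "us = map Inl vs" by auto
  have ne: "vs \<noteq> []" using vs by (auto simp: branches_def is_path_def is_cycle_def)
  show "us \<in> branches (lift_graph G) (Inl ` S) (Inl i) (Inl j)"
    using vs lift_branch_mem[OF ne] by metis
qed

lemma lift_path_weight:
  assumes "2 \<le> length us"
  shows "path_weight (lift_graph G) (map Inl us) = path_weight G us"
proof -
  have "0 < length us" "Suc 0 < length us" using assms by auto
  thus ?thesis unfolding path_weight_def
    by (auto intro!: prod.cong arg_cong2[where f="(*)"])
qed

lemma lift_st:
  assumes "st G S"
  shows "st (lift_graph G) (Inl ` S)"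
  unfolding st_def
proof (intro conjI)
  show "Inl ` S \<noteq> {}" "Inl ` S \<subseteq> verts (lift_graph G)" using assms by (auto simp: st_def)
  show "\<not> (\<exists>us. is_cycle (lift_graph G) us \<and> 3 \<le> length us \<and> set us \<subseteq> verts (lift_graph G) - Inl ` S)"
  proof
    assume "\<exists>us. is_cycle (lift_graph G) us \<and> 3 \<le> length us \<and> set us \<subseteq> verts (lift_graph G) - Inl ` S"
    then obtain us where us: "is_cycle (lift_graph G) us" "3 \<le> length us" "set us \<subseteq> verts (lift_graph G) - Inl ` S"
      by blast
    hence "set us \<subseteq> range Inl" by auto
    hence eq: "us = map Inl (map projl us)" by (rule map_projl_Inl)
    have "is_cycle G (map projl us)" using us(1) eq lift_cycle by metis
    moreover have "set (map projl us) \<subseteq> verts G - S"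
    proof
      fix a assume "a \<in> set (map projl us)"
      then obtain x where x: "x \<in> set us" "a = projl x" by auto
      then obtain b where "x = Inl b" "b \<in> verts G" "Inl b \<notin> Inl ` S" using us(3) by auto
      thus "a \<in> verts G - S" using x by auto
    qed
    moreover have "3 \<le> length (map projl us)" using us(2) by simp
    moreover have "\<not> (\<exists>us. is_cycle G us \<and> 3 \<le> length us \<and> set us \<subseteq> verts G - S)"
      using assms by (simp add: st_def)
    ultimately show False by blast
  qed
  show "\<forall>i\<in>verts (lift_graph G) - Inl ` S. wt (lift_graph G) i i \<noteq> lam"
    using assms by (auto simp: st_def)
qed

lemma lift_card: "card (verts (lift_graph G)) = card (verts G)"
  by (simp add: card_image)

lemma lift_weight_set: "weight_set (lift_graph G) = weight_set G"
proof (rule Set.set_eqI, rule iffI)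
  fix c assume "c \<in> weight_set (lift_graph G)"
  then obtain x y where "(x, y) \<in> arcs (lift_graph G)" "c = wt (lift_graph G) x y"
    by (auto simp: weight_set_def)
  thus "c \<in> weight_set G" by (cases x; cases y) (auto simp: weight_set_def)
next
  fix c assume "c \<in> weight_set G"
  then obtain x y where "(x, y) \<in> arcs G" "c = wt G x y"
    by (auto simp: weight_set_def)
  hence "(Inl x, Inl y) \<in> arcs (lift_graph G)" "c = wt (lift_graph G) (Inl x) (Inl y)" by auto
  thus "c \<in> weight_set (lift_graph G)" unfolding weight_set_def by blast
qed



definition LA :: "'v graph \<Rightarrow> 'v set \<Rightarrow> ('v \<Rightarrow> 'v list) \<Rightarrow> (('v + 'v \<times> nat) \<times> ('v + 'v \<times> nat)) set" where
  "LA G S beta = {(x, y). (\<exists>j k. Lpath_arc S beta j k \<and> x = Lnode beta j (Suc k) \<and> y = Lnode beta j k)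
                  \<or> (\<exists>j \<in> S. \<exists>i \<in> S. \<exists>\<gamma> \<in> branches G S i j - {beta j}.
                        x = Inl i \<and> y = Lnode beta j (length \<gamma> - 2))}"

definition LW1 :: "'v graph \<Rightarrow> 'v set \<Rightarrow> ('v \<Rightarrow> 'v list) \<Rightarrow> ('v + 'v \<times> nat) \<Rightarrow> ('v + 'v \<times> nat) \<Rightarrow> rf" where
  "LW1 G S beta x y = (\<Sum>j \<in> S. \<Sum>k \<in> {0..<length (beta j) - 1}.
                  if x = Lnode beta j (Suc k) \<and> y = Lnode beta j k
                  then (if Suc k = length (beta j) - 1
                        then lam ^ (length (beta j) - 2) * path_weight G (beta j) else 1)
                  else 0)"

definition LW2 :: "'v graph \<Rightarrow> 'v set \<Rightarrow> ('v \<Rightarrow> 'v list) \<Rightarrow> ('v + 'v \<times> nat) \<Rightarrow> ('v + 'v \<times> nat) \<Rightarrow> rf" where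
  "LW2 G S beta x y = (\<Sum>j \<in> S. \<Sum>i \<in> S. \<Sum>\<gamma> \<in> branches G S i j - {beta j}.
                  if x = Inl i \<and> y = Lnode beta j (length \<gamma> - 2)
                  then lam ^ (length \<gamma> - 2) * path_weight G \<gamma> else 0)"

lemma Lcon_verts: "verts (Lcon G S beta) = Inl ` S \<union> {Inr (j, k) | j k. j \<in> S \<and> 1 \<le> k \<and> k < length (beta j) - 1}"
  by (simp add: Lcon_def Let_def)
lemma Lcon_arcs: "arcs (Lcon G S beta) = LA G S beta"
  by (simp add: Lcon_def Let_def LA_def)
lemma Lcon_wt: "wt (Lcon G S beta) x y = (if (x, y) \<in> LA G S beta then LW1 G S beta x y + LW2 G S beta x y else 0)"
  by (simp only: Lcon_def Let_def graph.select_convs LA_def[symmetric] LW1_def[symmetric] LW2_def[symmetric])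

lemma Lnode_Inl: "(Lnode beta j k = Inl x) = ((k = 0 \<and> x = j) \<or> (k \<noteq> 0 \<and> k = length (beta j) - 1 \<and> x = hd (beta j)))"
  by (auto simp: Lnode_def)
lemma Lnode_Inr: "(Lnode beta j k = Inr p) = (k \<noteq> 0 \<and> k \<noteq> length (beta j) - 1 \<and> p = (j, k))"
  by (auto simp: Lnode_def)
lemma Lnode_0[simp]: "Lnode beta j 0 = Inl j" by (simp add: Lnode_def)
lemma Lnode_inj:
  assumes "k < length (beta j) - 1" "k' < length (beta j') - 1" "Lnode beta j k = Lnode beta j' k'"
  shows "j = j' \<and> k = k'"
  using assms by (auto simp: Lnode_def split: if_splits)

lemma consec_Cons2: "consec_edges H (x # y # zs) = (is_edge H x y \<and> consec_edges H (y # zs))"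
  unfolding consec_edges_def by (auto simp: less_Suc_eq_0_disj)
lemma consec_single[simp]: "consec_edges H [x]" "consec_edges H []"
  unfolding consec_edges_def by auto

definition chain :: "('v \<Rightarrow> 'v list) \<Rightarrow> 'v \<Rightarrow> nat \<Rightarrow> ('v + 'v \<times> nat) list" where
  "chain beta j k = map (Lnode beta j) (rev [0..<Suc k])"

lemma chain_0[simp]: "chain beta j 0 = [Inl j]" by (simp add: chain_def)
lemma chain_Suc: "chain beta j (Suc k) = Lnode beta j (Suc k) # chain beta j k"
  by (simp add: chain_def)
lemma chain_ne[simp]: "chain beta j k \<noteq> []" by (simp add: chain_def)
lemma chain_last[simp]: "last (chain beta j k) = Inl j" by (induct k) (auto simp: chain_Suc)
lemma chain_hd[simp]: "hd (chain beta j k) = Lnode beta j k" by (cases k) (auto simp: chain_Suc)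
lemma chain_len[simp]: "length (chain beta j k) = Suc k" by (simp add: chain_def)
lemma chain_set: "set (chain beta j k) = Lnode beta j ` {0..k}"
  unfolding chain_def set_map set_rev set_upt by (simp only: atLeastLessThanSuc_atLeastAtMost)
lemma chain_split: "chain beta j k = map (Lnode beta j) (rev [1..<Suc k]) @ [Inl j]"
  by (induct k) (auto simp: chain_Suc)

context
  fixes G :: "'v graph" and S :: "'v set" and beta :: "'v \<Rightarrow> 'v list"
  assumes wf: "wf_graph G" and st0: "st0 G S" and mbc: "max_branch_choice G S beta"
begin

lemma SV: "S \<subseteq> verts G" using st0 by (simp add: st0_def st_def)
lemma finV: "finite (verts G)" using wf by (simp add: wf_graph_def)
lemma finS: "finite S" using SV finV finite_subset by blast

lemma branch_len: "\<gamma> \<in> branches G S i j \<Longrightarrow> 2 \<le> length \<gamma>"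
  by (auto simp: branches_def is_path_def is_cycle_def)

lemma beta_branch: "j \<in> S \<Longrightarrow> beta j \<in> branches G S (hd (beta j)) j \<and> hd (beta j) \<in> S"
  using mbc by (auto simp: max_branch_choice_def branches_def)

lemma beta_len: "j \<in> S \<Longrightarrow> 2 \<le> length (beta j)"
  using beta_branch branch_len by blast

lemma branch_max: "i \<in> S \<Longrightarrow> j \<in> S \<Longrightarrow> \<gamma> \<in> branches G S i j \<Longrightarrow> length \<gamma> \<le> length (beta j)"
  using mbc by (auto simp: max_branch_choice_def)

lemma branch_hd: "\<gamma> \<in> branches G S i j \<Longrightarrow> hd \<gamma> = i \<and> last \<gamma> = j \<and> i \<in> S \<and> j \<in> S"
  by (auto simp: branches_def)

lemma finite_branches: "i \<in> S \<Longrightarrow> j \<in> S \<Longrightarrow> finite (branches G S i j)"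
  using branches_char[OF SV] finite_dls[of "verts G - S"] finV by simp

lemma out_Inr:
  assumes "(Inr (j, k), y) \<in> LA G S beta"
  shows "j \<in> S \<and> 1 \<le> k \<and> k < length (beta j) - 1 \<and> y = Lnode beta j (k - 1)"
  using assms by (auto simp: LA_def Lpath_arc_def Lnode_Inr sym[OF Lnode_Inr[of beta]] Lnode_def split: if_splits)

lemma out_Inl:
  assumes "(Inl i, y) \<in> LA G S beta"
  shows "\<exists>j\<in>S. \<exists>k. k < length (beta j) - 1 \<and> y = Lnode beta j k \<and> i \<in> S \<and>
           (\<exists>\<gamma>\<in>branches G S i j. length \<gamma> - 2 = k)"
proof -
  from assms consider
    (p) j k where "Lpath_arc S beta j k" "Inl i = Lnode beta j (Suc k)" "y = Lnode beta j k"
  | (g) j \<gamma> where "j \<in> S" "i \<in> S" "\<gamma> \<in> branches G S i j - {beta j}" "y = Lnode beta j (length \<gamma> - 2)"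
    unfolding LA_def by blast
  thus ?thesis
  proof cases
    case p
    hence j: "j \<in> S" "k < length (beta j) - 1" "Suc k = length (beta j) - 1" "i = hd (beta j)"
      by (auto simp: Lpath_arc_def Lnode_def split: if_splits)
    moreover have "length (beta j) - 2 = k" using j beta_len[OF j(1)] by simp
    ultimately show ?thesis using p beta_branch[OF j(1)] by blast
  next
    case g
    have "length \<gamma> \<le> length (beta j)" using branch_max[OF g(2,1)] g(3) by auto
    moreover have "2 \<le> length \<gamma>" using g(3) branch_len by auto
    ultimately have "length \<gamma> - 2 < length (beta j) - 1" by simp
    thus ?thesis using g by blast
  qed
qed

lemma arc_Inl_iff:
  assumes i: "i \<in> S" and j: "j \<in> S" and k: "k < length (beta j) - 1"
  shows "((Inl i, Lnode beta j k) \<in> LA G S beta) = (\<exists>\<gamma>\<in>branches G S i j. length \<gamma> - 2 = k)"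
proof
  assume "(Inl i, Lnode beta j k) \<in> LA G S beta"
  from out_Inl[OF this] obtain j' k' where jk: "j' \<in> S" "k' < length (beta j') - 1" "Lnode beta j k = Lnode beta j' k'"
    "\<exists>\<gamma>\<in>branches G S i j'. length \<gamma> - 2 = k'" by blast
  with Lnode_inj[OF k jk(2,3)] show "\<exists>\<gamma>\<in>branches G S i j. length \<gamma> - 2 = k" by blast
next
  assume "\<exists>\<gamma>\<in>branches G S i j. length \<gamma> - 2 = k"
  then obtain \<gamma> where g: "\<gamma> \<in> branches G S i j" "length \<gamma> - 2 = k" by blast
  show "(Inl i, Lnode beta j k) \<in> LA G S beta"
  proof (cases "\<gamma> = beta j")
    case True
    hence "hd (beta j) = i" using g branch_hd by blast
    moreover have "Suc k = length (beta j) - 1" using g True beta_len[OF j] by simp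
    ultimately have "Lnode beta j (Suc k) = Inl i" using beta_len[OF j] by (simp add: Lnode_def)
    thus ?thesis unfolding LA_def mem_Collect_eq case_prod_conv
      by (intro disjI1 exI[of _ j] exI[of _ k]) (use k j in \<open>auto simp: Lpath_arc_def\<close>)
  next
    case False
    thus ?thesis unfolding LA_def using g i j by blast
  qed
qed

lemma chain_arc:
  assumes j: "j \<in> S" and t: "Suc t < length (beta j) - 1"
  shows "(Lnode beta j (Suc t), Lnode beta j t) \<in> LA G S beta"
  unfolding LA_def mem_Collect_eq case_prod_conv
  by (intro disjI1 exI[of _ j] exI[of _ t]) (use j t in \<open>auto simp: Lpath_arc_def\<close>)

lemma descent:
  assumes "j \<in> S" "1 \<le> k" "k < length (beta j) - 1"
    "consec_edges (Lcon G S beta) (Lnode beta j k # us)" "us \<noteq> []" "last us \<in> Inl ` S"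
    "\<forall>x\<in>set (butlast us). x \<notin> Inl ` S"
  shows "Lnode beta j k # us = chain beta j k"
  using assms
proof (induction k arbitrary: us)
  case 0 thus ?case by simp
next
  case (Suc k)
  obtain y us' where us: "us = y # us'" using Suc.prems(5) by (cases us) auto
  have nd: "Lnode beta j (Suc k) = Inr (j, Suc k)" using Suc.prems(3) by (simp add: Lnode_def)
  have "(Inr (j, Suc k), y) \<in> LA G S beta"
    using Suc.prems(4) nd us by (simp add: consec_Cons2 is_edge_def Lcon_arcs)
  hence y: "y = Lnode beta j k" using out_Inr by fastforce
  show ?case
  proof (cases "k = 0")
    case True
    hence "y = Inl j" using y by simp
    hence "us' = []" using Suc.prems(1,7) us by (cases us') auto
    thus ?thesis using us y True by (simp add: chain_Suc)
  next
    case False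
    hence ndk: "y = Inr (j, k)" using y Suc.prems(3) by (simp add: Lnode_def)
    hence "us' \<noteq> []" using Suc.prems(6) us by auto
    hence "Lnode beta j k # us' = chain beta j k"
      using Suc.IH[of us'] Suc.prems False us y by (auto simp: consec_Cons2)
    thus ?thesis using us y by (simp add: chain_Suc)
  qed
qed

end


lemma consec_Cons: "ys \<noteq> [] \<Longrightarrow> consec_edges H (x # ys) = (is_edge H x (hd ys) \<and> consec_edges H ys)"
  by (cases ys) (auto simp: consec_Cons2)

context
  fixes G :: "'v graph" and S :: "'v set" and beta :: "'v \<Rightarrow> 'v list"
  assumes wf: "wf_graph G" and st0: "st0 G S" and mbc: "max_branch_choice G S beta"
begin

lemma Lnode_Inr':
  assumes "1 \<le> t" "t < length (beta j) - 1"
  shows "Lnode beta j t = Inr (j, t)"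
  using assms by (simp add: Lnode_def)

lemma Lnode_verts:
  assumes j: "j \<in> S" and t: "t < length (beta j) - 1"
  shows "Lnode beta j t \<in> verts (Lcon G S beta)"
proof (cases "t = 0")
  case True thus ?thesis using j by (simp add: Lcon_verts)
next
  case False thus ?thesis using j t Lnode_Inr'[of t j] by (auto simp: Lcon_verts)
qed

lemma chain_consec:
  assumes j: "j \<in> S" and k: "k < length (beta j) - 1"
  shows "consec_edges (Lcon G S beta) (chain beta j k)"
  using k
proof (induction k)
  case 0 thus ?case by simp
next
  case (Suc k)
  have "(Lnode beta j (Suc k), Lnode beta j k) \<in> LA G S beta"
    by (rule chain_arc[OF wf st0 mbc j Suc.prems])
  thus ?case using Suc by (simp add: chain_Suc consec_Cons is_edge_def Lcon_arcs)
qed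

lemma chain_distinct:
  assumes j: "j \<in> S" and k: "k < length (beta j) - 1"
  shows "distinct (chain beta j k)"
  unfolding chain_def distinct_map
proof
  show "inj_on (Lnode beta j) (set (rev [0..<Suc k]))"
  proof (rule inj_onI)
    fix x y assume xy: "x \<in> set (rev [0..<Suc k])" "y \<in> set (rev [0..<Suc k])" "Lnode beta j x = Lnode beta j y"
    hence "x < length (beta j) - 1" "y < length (beta j) - 1" using k by auto
    thus "x = y" using Lnode_inj[of x beta j y j] xy(3) by blast
  qed
qed simp

lemma chain_butlast:
  "set (butlast (chain beta j k)) = Lnode beta j ` {1..k}"
  unfolding chain_split by (auto simp: butlast_append)

lemma Lbranches:
  assumes i: "i \<in> S" and j: "j \<in> S"
  shows "branches (Lcon G S beta) (Inl ` S) (Inl i) (Inl j) =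
    (\<lambda>k. Inl i # chain beta j k) ` {k. k < length (beta j) - 1 \<and> (Inl i, Lnode beta j k) \<in> LA G S beta}"
proof (rule Set.set_eqI, rule iffI)
  fix us assume us: "us \<in> branches (Lcon G S beta) (Inl ` S) (Inl i) (Inl j)"
  hence len: "2 \<le> length us" and hd: "hd us = Inl i" and last: "last us = Inl j"
    and int: "interior us \<inter> Inl ` S = {}" and ce: "consec_edges (Lcon G S beta) us"
    by (auto simp: branches_def is_path_def is_cycle_def)
  obtain y rest where us_eq: "us = Inl i # y # rest" using len hd
    by (cases us; cases "tl us") auto
  have arc: "(Inl i, y) \<in> LA G S beta" using ce us_eq by (simp add: consec_Cons2 is_edge_def Lcon_arcs)
  from out_Inl[OF wf st0 mbc arc] obtain j' k where jk: "j' \<in> S" "k < length (beta j') - 1" "y = Lnode beta j' k"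
    by blast
  have intset: "interior us = set (butlast (y # rest))" by (simp add: interior_def us_eq)
  show "us \<in> (\<lambda>k. Inl i # chain beta j k) ` {k. k < length (beta j) - 1 \<and> (Inl i, Lnode beta j k) \<in> LA G S beta}"
  proof (cases "k = 0")
    case True
    hence yj: "y = Inl j'" using jk by simp
    have "rest = []"
    proof (rule ccontr)
      assume "rest \<noteq> []"
      hence "y \<in> interior us" using intset by (cases rest) auto
      thus False using int yj jk by auto
    qed
    hence "j' = j" using last us_eq yj by simp
    thus ?thesis using us_eq \<open>rest = []\<close> yj True jk arc by (auto intro!: image_eqI[of _ _ 0])
  next
    case False
    have yr: "y = Inr (j', k)" using jk False Lnode_Inr'[of k j'] by simp
    have rne: "rest \<noteq> []" using last us_eq yr by auto
    have "Lnode beta j' k # rest = chain beta j' k"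
    proof (rule descent[OF wf st0 mbc jk(1) _ jk(2)])
      show "1 \<le> k" using False by simp
      show "consec_edges (Lcon G S beta) (Lnode beta j' k # rest)" using ce us_eq jk by (simp add: consec_Cons2)
      show "rest \<noteq> []" by fact
      show "last rest \<in> Inl ` S" using last us_eq rne j by simp
      show "\<forall>x\<in>set (butlast rest). x \<notin> Inl ` S"
        using int intset rne by (auto simp: butlast.simps(2))
    qed
    hence "last (chain beta j' k) = Inl j" using last us_eq rne jk by simp
    hence "j' = j" by simp
    thus ?thesis using us_eq jk arc \<open>Lnode beta j' k # rest = chain beta j' k\<close>
      by (auto intro!: image_eqI[of _ _ k])
  qed
next
  fix us assume "us \<in> (\<lambda>k. Inl i # chain beta j k) ` {k. k < length (beta j) - 1 \<and> (Inl i, Lnode beta j k) \<in> LA G S beta}"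
  then obtain k where k: "k < length (beta j) - 1" "(Inl i, Lnode beta j k) \<in> LA G S beta"
    and us: "us = Inl i # chain beta j k" by auto
  have Inr_part: "\<forall>x \<in> set (butlast (chain beta j k)). x \<notin> range Inl"
    unfolding chain_butlast using k Lnode_Inr' by auto
  have "set (chain beta j k) \<subseteq> verts (Lcon G S beta)"
    using Lnode_verts[OF j] k by (auto simp: chain_set)
  moreover have "Inl i \<in> verts (Lcon G S beta)" using i by (simp add: Lcon_verts)
  ultimately have setv: "set us \<subseteq> verts (Lcon G S beta)" by (simp add: us)
  have ce: "consec_edges (Lcon G S beta) us"
    using chain_consec[OF j k(1)] k by (simp add: us consec_Cons is_edge_def Lcon_arcs)
  have int: "interior us \<inter> Inl ` S = {}"
    using Inr_part by (auto simp: interior_def us)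
  have dch: "distinct (chain beta j k)" by (rule chain_distinct[OF j k(1)])
  have "is_path (Lcon G S beta) us \<or> is_cycle (Lcon G S beta) us"
  proof (cases "i = j")
    case False
    have "Inl i \<notin> set (chain beta j k)"
    proof
      assume "Inl i \<in> set (chain beta j k)"
      then obtain t where "t \<le> k" "Lnode beta j t = Inl i" by (auto simp: chain_set)
      thus False using False k by (auto simp: Lnode_Inl)
    qed
    thus ?thesis using dch setv ce by (auto simp: is_path_def us)
  next
    case True
    have "butlast us = Inl j # butlast (chain beta j k)" by (simp add: us True)
    moreover have "distinct (butlast (chain beta j k))" using dch by (simp add: distinct_butlast)
    ultimately have "distinct (butlast us)" using Inr_part by auto
    thus ?thesis using setv ce True by (auto simp: is_cycle_def us)
  qed
  thus "us \<in> branches (Lcon G S beta) (Inl ` S) (Inl i) (Inl j)"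
    unfolding branches_def using int i j by (auto simp: us)
qed

end


context
  fixes G :: "'v graph" and S :: "'v set" and beta :: "'v \<Rightarrow> 'v list"
  assumes wf: "wf_graph G" and st0: "st0 G S" and mbc: "max_branch_choice G S beta"
begin

lemma W_chain:
  assumes j: "j \<in> S" and t: "Suc t < length (beta j) - 1"
  shows "wt (Lcon G S beta) (Lnode beta j (Suc t)) (Lnode beta j t) = 1"
proof -
  have arc: "(Lnode beta j (Suc t), Lnode beta j t) \<in> LA G S beta" by (rule chain_arc[OF wf st0 mbc j t])
  have nd: "Lnode beta j (Suc t) = Inr (j, Suc t)" using t by (simp add: Lnode_def)
  have "LW2 G S beta (Lnode beta j (Suc t)) (Lnode beta j t) = 0"
    unfolding LW2_def nd by (intro sum.neutral ballI) auto
  moreover have "LW1 G S beta (Lnode beta j (Suc t)) (Lnode beta j t) = 1"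
  proof -
    have inner: "(\<Sum>k \<in> {0..<length (beta j') - 1}.
                  if Lnode beta j (Suc t) = Lnode beta j' (Suc k) \<and> Lnode beta j t = Lnode beta j' k
                  then (if Suc k = length (beta j') - 1
                        then lam ^ (length (beta j') - 2) * path_weight G (beta j') else 1)
                  else 0) = (if j' = j then 1 else 0)" if j': "j' \<in> S" for j'
    proof -
      have "(\<Sum>k \<in> {0..<length (beta j') - 1}.
                  if Lnode beta j (Suc t) = Lnode beta j' (Suc k) \<and> Lnode beta j t = Lnode beta j' k
                  then (if Suc k = length (beta j') - 1
                        then lam ^ (length (beta j') - 2) * path_weight G (beta j') else 1)
                  else 0) = (\<Sum>k \<in> {0..<length (beta j') - 1}. if k = t \<and> j' = j then 1 else 0)"
      proof (intro sum.cong refl)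
        fix k assume k: "k \<in> {0..<length (beta j') - 1}"
        have "(Lnode beta j t = Lnode beta j' k) = (j = j' \<and> t = k)"
          using Lnode_inj[of t beta j k j'] k t by auto
        thus "(if Lnode beta j (Suc t) = Lnode beta j' (Suc k) \<and> Lnode beta j t = Lnode beta j' k
                  then (if Suc k = length (beta j') - 1
                        then lam ^ (length (beta j') - 2) * path_weight G (beta j') else 1)
                  else 0) = (if k = t \<and> j' = j then 1 else 0)" using t by auto
      qed
      also have "\<dots> = (if j' = j then 1 else 0)" using t by (simp add: sum.delta)
      finally show ?thesis .
    qed
    have "LW1 G S beta (Lnode beta j (Suc t)) (Lnode beta j t) = (\<Sum>j' \<in> S. if j' = j then 1 else 0)"
      unfolding LW1_def by (intro sum.cong refl) (rule inner)
    thus ?thesis using j by (simp add: finS[OF wf st0 mbc] sum.delta')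
  qed
  ultimately show ?thesis using arc by (simp add: Lcon_wt)
qed

lemma W_Inl:
  assumes i: "i \<in> S" and j: "j \<in> S" and k: "k < length (beta j) - 1"
  shows "wt (Lcon G S beta) (Inl i) (Lnode beta j k) =
    (\<Sum>\<gamma> \<in> {\<gamma> \<in> branches G S i j. length \<gamma> - 2 = k}. lam ^ k * path_weight G \<gamma>)"
proof -
  define Bk where "Bk = {\<gamma> \<in> branches G S i j. length \<gamma> - 2 = k}"
  have finS: "finite S" by (rule finS[OF wf st0 mbc])
  have finB: "finite (branches G S i j)" by (rule finite_branches[OF wf st0 mbc i j])
  have finBk: "finite Bk" using finB by (simp add: Bk_def)
  have lj: "2 \<le> length (beta j)" by (rule beta_len[OF wf st0 mbc j])
  define c where "c = (Suc k = length (beta j) - 1 \<and> i = hd (beta j))"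
  have betaB: "(beta j \<in> Bk) = c"
  proof -
    have "beta j \<in> branches G S (hd (beta j)) j" using beta_branch[OF wf st0 mbc j] by blast
    hence "(beta j \<in> branches G S i j) = (i = hd (beta j))"
      using branch_hd[OF wf st0 mbc, of "beta j" i j] by metis
    thus ?thesis using lj by (auto simp: Bk_def c_def)
  qed
  have LW1: "LW1 G S beta (Inl i) (Lnode beta j k) = (if c then lam ^ k * path_weight G (beta j) else 0)"
  proof -
    have inner: "(\<Sum>k' \<in> {0..<length (beta j') - 1}.
                  if Inl i = Lnode beta j' (Suc k') \<and> Lnode beta j k = Lnode beta j' k'
                  then (if Suc k' = length (beta j') - 1
                        then lam ^ (length (beta j') - 2) * path_weight G (beta j') else 1)
                  else 0) = (if j' = j then (if c then lam ^ k * path_weight G (beta j) else 0) else 0)"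
      if j': "j' \<in> S" for j'
    proof -
      have "(\<Sum>k' \<in> {0..<length (beta j') - 1}.
                  if Inl i = Lnode beta j' (Suc k') \<and> Lnode beta j k = Lnode beta j' k'
                  then (if Suc k' = length (beta j') - 1
                        then lam ^ (length (beta j') - 2) * path_weight G (beta j') else 1)
                  else 0) = (\<Sum>k' \<in> {0..<length (beta j') - 1}. if k' = k \<and> j' = j then
                      (if c then lam ^ k * path_weight G (beta j) else 0) else 0)"
      proof (intro sum.cong refl)
        fix k' assume k': "k' \<in> {0..<length (beta j') - 1}"
        have "(Lnode beta j k = Lnode beta j' k') = (j = j' \<and> k = k')"
          using Lnode_inj[of k beta j k' j'] k' k by auto
        moreover have "(Inl i = Lnode beta j (Suc k)) = c"
          unfolding c_def using Lnode_Inl[of beta j "Suc k" i] by auto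
        moreover have "c \<Longrightarrow> length (beta j) - 2 = k" unfolding c_def by linarith
        note facts = calculation this
        show "(if Inl i = Lnode beta j' (Suc k') \<and> Lnode beta j k = Lnode beta j' k'
                  then (if Suc k' = length (beta j') - 1
                        then lam ^ (length (beta j') - 2) * path_weight G (beta j') else 1)
                  else 0) = (if k' = k \<and> j' = j then
                      (if c then lam ^ k * path_weight G (beta j) else 0) else 0)"
        proof (cases "j' = j \<and> k' = k")
          case True
          hence jj: "j' = j" "k' = k" by auto
          show ?thesis
          proof (cases c)
            case True
            hence "Suc k = length (beta j) - 1" "length (beta j) - 2 = k" using facts(3) by (auto simp: c_def)
            thus ?thesis using True facts(2) jj by simp
          next
            case False
            thus ?thesis using facts(2) jj by simp
          qed
        next
          case False
          hence "Lnode beta j k \<noteq> Lnode beta j' k'" using facts(1) by blast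
          thus ?thesis using False by auto
        qed
      qed
      also have "\<dots> = (if j' = j then (if c then lam ^ k * path_weight G (beta j) else 0) else 0)"
        using k by (simp add: sum.delta)
      finally show ?thesis .
    qed
    have "LW1 G S beta (Inl i) (Lnode beta j k) = (\<Sum>j' \<in> S. if j' = j then (if c then lam ^ k * path_weight G (beta j) else 0) else 0)"
      unfolding LW1_def by (intro sum.cong refl) (rule inner)
    thus ?thesis using j by (simp add: finS sum.delta')
  qed
  have LW2: "LW2 G S beta (Inl i) (Lnode beta j k) = (\<Sum>\<gamma> \<in> Bk - {beta j}. lam ^ k * path_weight G \<gamma>)"
  proof -
    have inner: "(\<Sum>i' \<in> S. \<Sum>\<gamma> \<in> branches G S i' j' - {beta j'}.
                  if Inl i = Inl i' \<and> Lnode beta j k = Lnode beta j' (length \<gamma> - 2)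
                  then lam ^ (length \<gamma> - 2) * path_weight G \<gamma> else 0)
       = (if j' = j then (\<Sum>\<gamma> \<in> Bk - {beta j}. lam ^ k * path_weight G \<gamma>) else 0)"
      if j': "j' \<in> S" for j'
    proof -
      have "(\<Sum>i' \<in> S. \<Sum>\<gamma> \<in> branches G S i' j' - {beta j'}.
                  if Inl i = Inl i' \<and> Lnode beta j k = Lnode beta j' (length \<gamma> - 2)
                  then lam ^ (length \<gamma> - 2) * path_weight G \<gamma> else 0)
          = (\<Sum>i' \<in> S. if i' = i then (\<Sum>\<gamma> \<in> branches G S i j' - {beta j'}.
                  if j' = j \<and> length \<gamma> - 2 = k then lam ^ k * path_weight G \<gamma> else 0) else 0)"
      proof (intro sum.cong refl)
        fix i' assume i': "i' \<in> S"
        show "(\<Sum>\<gamma> \<in> branches G S i' j' - {beta j'}.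
                  if Inl i = Inl i' \<and> Lnode beta j k = Lnode beta j' (length \<gamma> - 2)
                  then lam ^ (length \<gamma> - 2) * path_weight G \<gamma> else 0)
          = (if i' = i then (\<Sum>\<gamma> \<in> branches G S i j' - {beta j'}.
                  if j' = j \<and> length \<gamma> - 2 = k then lam ^ k * path_weight G \<gamma> else 0) else 0)"
        proof (cases "i' = i")
          case True
          show ?thesis unfolding True
          proof (simp, intro sum.cong refl)
            fix \<gamma> assume g: "\<gamma> \<in> branches G S i j' - {beta j'}"
            have "length \<gamma> \<le> length (beta j')" using branch_max[OF wf st0 mbc i j'] g by auto
            moreover have "2 \<le> length \<gamma>" using g branch_len[OF wf st0 mbc] by auto
            ultimately have "length \<gamma> - 2 < length (beta j') - 1" by simp
            hence "(Lnode beta j k = Lnode beta j' (length \<gamma> - 2)) = (j = j' \<and> k = length \<gamma> - 2)"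
              using Lnode_inj[of k beta j "length \<gamma> - 2" j'] k by auto
            thus "(if Lnode beta j k = Lnode beta j' (length \<gamma> - 2)
                then lam ^ (length \<gamma> - 2) * path_weight G \<gamma> else 0) =
              (if j' = j \<and> length \<gamma> - 2 = k then lam ^ k * path_weight G \<gamma> else 0)" by auto
          qed
        qed simp
      qed
      also have "\<dots> = (\<Sum>\<gamma> \<in> branches G S i j' - {beta j'}.
                  if j' = j \<and> length \<gamma> - 2 = k then lam ^ k * path_weight G \<gamma> else 0)"
        using i finS by (simp add: sum.delta')
      also have "\<dots> = (if j' = j then (\<Sum>\<gamma> \<in> Bk - {beta j}. lam ^ k * path_weight G \<gamma>) else 0)"
      proof (cases "j' = j")
        case True
        have "(\<Sum>\<gamma> \<in> branches G S i j - {beta j}. if length \<gamma> - 2 = k then lam ^ k * path_weight G \<gamma> else 0)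
            = (\<Sum>\<gamma> \<in> Bk - {beta j}. lam ^ k * path_weight G \<gamma>)"
          unfolding Bk_def using finB
          by (subst sum.inter_filter[symmetric]) (auto intro!: sum.cong)
        thus ?thesis using True by simp
      qed simp
      finally show ?thesis .
    qed
    have "LW2 G S beta (Inl i) (Lnode beta j k) = (\<Sum>j' \<in> S. if j' = j then (\<Sum>\<gamma> \<in> Bk - {beta j}. lam ^ k * path_weight G \<gamma>) else 0)"
      unfolding LW2_def by (intro sum.cong refl) (rule inner)
    thus ?thesis using j by (simp add: finS sum.delta')
  qed
  have sum: "LW1 G S beta (Inl i) (Lnode beta j k) + LW2 G S beta (Inl i) (Lnode beta j k) =
      (\<Sum>\<gamma> \<in> Bk. lam ^ k * path_weight G \<gamma>)"
  proof (cases c)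
    case True
    hence "beta j \<in> Bk" using betaB by simp
    thus ?thesis unfolding LW1 LW2 using True finBk by (simp add: sum.remove)
  next
    case False
    hence "Bk - {beta j} = Bk" using betaB by auto
    thus ?thesis unfolding LW1 LW2 using False by simp
  qed
  show ?thesis
  proof (cases "(Inl i, Lnode beta j k) \<in> LA G S beta")
    case True thus ?thesis unfolding Bk_def[symmetric] using sum by (simp add: Lcon_wt)
  next
    case False
    hence "Bk = {}" using arc_Inl_iff[OF wf st0 mbc i j k] by (auto simp: Bk_def)
    thus ?thesis unfolding Bk_def[symmetric] using False by (simp add: Lcon_wt)
  qed
qed

end


lemma isored_eqI:
  assumes "\<And>x y. x \<in> T \<Longrightarrow> y \<in> T \<Longrightarrow> (branches H1 T x y \<noteq> {}) = (branches H2 T x y \<noteq> {})"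
    and "\<And>x y. x \<in> T \<Longrightarrow> y \<in> T \<Longrightarrow> (\<Sum>\<beta> \<in> branches H1 T x y. path_weight H1 \<beta>) = (\<Sum>\<beta> \<in> branches H2 T x y. path_weight H2 \<beta>)"
  shows "isored H1 T = isored H2 T"
proof -
  have A: "{(i, j). i \<in> T \<and> j \<in> T \<and> branches H1 T i j \<noteq> {}} = {(i, j). i \<in> T \<and> j \<in> T \<and> branches H2 T i j \<noteq> {}}"
    using assms(1) by blast
  have W: "(\<lambda>i j. if i \<in> T \<and> j \<in> T \<and> branches H1 T i j \<noteq> {} then (\<Sum>\<beta> \<in> branches H1 T i j. path_weight H1 \<beta>) else 0)
     = (\<lambda>i j. if i \<in> T \<and> j \<in> T \<and> branches H2 T i j \<noteq> {} then (\<Sum>\<beta> \<in> branches H2 T i j. path_weight H2 \<beta>) else 0)"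
    using assms by (intro ext) auto
  show ?thesis unfolding isored_def A W ..
qed

lemma U0: "unital_subring U \<Longrightarrow> 0 \<in> U"
  unfolding unital_subring_def by (metis add.right_inverse)

lemma U_sum: "unital_subring U \<Longrightarrow> (\<And>x. x \<in> A \<Longrightarrow> f x \<in> U) \<Longrightarrow> sum f A \<in> U"
proof (induction A rule: infinite_finite_induct)
  case (infinite A) thus ?case by (simp add: U0)
next
  case empty thus ?case by (simp add: U0)
next
  case (insert x F) thus ?case by (simp add: unital_subring_def)
qed

lemma wp_U:
  assumes "unital_subring U" "weight_set G \<subseteq> U" "consec_edges G us"
  shows "wp (wt G) us \<in> U"
  using assms(3)
proof (induction "wt G" us rule: wp.induct)
  case (1 x y zs)
  hence "(x, y) \<in> arcs G" "consec_edges G (y # zs)" by (auto simp: consec_Cons2 is_edge_def)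
  hence "wt G x y \<in> U" "wp (wt G) (y # zs) \<in> U" using 1 assms(2) by (auto simp: weight_set_def)
  thus ?case using assms(1) by (simp add: unital_subring_def)
qed (use assms(1) in \<open>auto simp: unital_subring_def\<close>)

context
  fixes G :: "'v graph" and S :: "'v set" and beta :: "'v \<Rightarrow> 'v list"
  assumes wf: "wf_graph G" and st0: "st0 G S" and mbc: "max_branch_choice G S beta"
begin

lemma Inr_noloop: "(Inr p, Inr p) \<notin> LA G S beta"
proof
  assume a: "(Inr p, Inr p) \<in> LA G S beta"
  obtain j k where p: "p = (j, k)" by (cases p)
  from out_Inr[OF wf st0 mbc a[unfolded p]] have k1: "1 \<le> k" and "Lnode beta j (k - 1) = Inr (j, k)" by auto
  hence "k - 1 = k" by (simp add: Lnode_Inr)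
  with k1 show False by simp
qed

lemma Lcon_loop: "x \<in> verts (Lcon G S beta) - Inl ` S \<Longrightarrow> wt (Lcon G S beta) x x = 0"
  using Inr_noloop by (auto simp: Lcon_verts Lcon_wt)

lemma Lcon_arc: "\<forall>x y. wt (Lcon G S beta) x y \<noteq> 0 \<longrightarrow> (x, y) \<in> arcs (Lcon G S beta)"
  by (auto simp: Lcon_wt Lcon_arcs split: if_splits)

lemma Lcon_fin: "finite (verts (Lcon G S beta))"
proof -
  have eq: "{Inr (j, k) | j k. j \<in> S \<and> 1 \<le> k \<and> k < length (beta j) - 1} = (\<lambda>(j,k). Inr (j, k)) ` (SIGMA j:S. {1..<length (beta j) - 1})"
    by auto
  show ?thesis unfolding Lcon_verts eq using finS[OF wf st0 mbc] by simp
qed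

lemma Lcon_card: "card (verts (Lcon G S beta)) = card S + (\<Sum>j \<in> S. length (beta j) - 2)"
proof -
  have finS: "finite S" by (rule finS[OF wf st0 mbc])
  define R :: "('v + 'v \<times> nat) set" where "R = {Inr (j, k) | j k. j \<in> S \<and> 1 \<le> k \<and> k < length (beta j) - 1}"
  have R: "R = (\<lambda>(j,k). Inr (j, k)) ` (SIGMA j:S. {1..<length (beta j) - 1})" by (auto simp: R_def)
  have cR: "card R = (\<Sum>j \<in> S. length (beta j) - 2)"
  proof -
    have "card R = card (SIGMA j:S. {1..<length (beta j) - 1})"
      unfolding R by (rule card_image) (auto simp: inj_on_def)
    also have "\<dots> = (\<Sum>j \<in> S. card {1..<length (beta j) - 1})" using finS by (simp add: card_SigmaI)
    also have "\<dots> = (\<Sum>j \<in> S. length (beta j) - 2)" by (intro sum.cong refl) simp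
    finally show ?thesis .
  qed
  have "verts (Lcon G S beta) = Inl ` S \<union> R" by (simp add: Lcon_verts R_def)
  moreover have "finite R" using finS R by simp
  moreover have "Inl ` S \<inter> R = {}" by (auto simp: R_def)
  ultimately have "card (verts (Lcon G S beta)) = card (Inl ` S :: ('v + 'v \<times> nat) set) + card R"
    using finS by (simp add: card_Un_disjoint)
  thus ?thesis using cR by (simp add: card_image numeral_2_eq_2)
qed

lemma Lcon_st: "st (Lcon G S beta) (Inl ` S)"
  unfolding st_def
proof (intro conjI)
  show "Inl ` S \<noteq> {}" using st0 by (simp add: st0_def st_def)
  show "Inl ` S \<subseteq> verts (Lcon G S beta)" by (auto simp: Lcon_verts)
  show "\<forall>i\<in>verts (Lcon G S beta) - Inl ` S. wt (Lcon G S beta) i i \<noteq> lam"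
    using Lcon_loop lam_nz by auto
  show "\<not> (\<exists>us. is_cycle (Lcon G S beta) us \<and> 3 \<le> length us \<and> set us \<subseteq> verts (Lcon G S beta) - Inl ` S)"
  proof
    assume "\<exists>us. is_cycle (Lcon G S beta) us \<and> 3 \<le> length us \<and> set us \<subseteq> verts (Lcon G S beta) - Inl ` S"
    then obtain cs where cyc: "is_cycle (Lcon G S beta) cs" and len: "3 \<le> length cs"
      and sub: "set cs \<subseteq> verts (Lcon G S beta) - Inl ` S" by blast
    define \<mu> :: "('v + 'v \<times> nat) \<Rightarrow> nat" where "\<mu> = (\<lambda>x. snd (projr x))"
    have isr: "\<exists>j k. cs ! t = Inr (j, k)" if "t < length cs" for t
    proof -
      have "cs ! t \<in> verts (Lcon G S beta) - Inl ` S" using sub that nth_mem by blast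
      thus ?thesis by (auto simp: Lcon_verts)
    qed
    have step: "\<mu> (cs ! Suc t) < \<mu> (cs ! t)" if t: "Suc t < length cs" for t
    proof -
      obtain j k where a: "cs ! t = Inr (j, k)" using isr t by fastforce
      obtain j' k' where b: "cs ! Suc t = Inr (j', k')" using isr t by blast
      have "(cs ! t, cs ! Suc t) \<in> LA G S beta"
        using cyc t by (auto simp: is_cycle_def consec_edges_def is_edge_def Lcon_arcs)
      from out_Inr[OF wf st0 mbc this[unfolded a]] have "1 \<le> k" "cs ! Suc t = Lnode beta j (k - 1)" by auto
      hence "Lnode beta j (k - 1) = Inr (j', k')" "1 \<le> k" using b by auto
      hence "k' = k - 1" "1 \<le> k" by (auto simp: Lnode_Inr)
      thus ?thesis using a b by (simp add: \<mu>_def)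
    qed
    have acc: "\<mu> (cs ! t) + t \<le> \<mu> (cs ! 0)" if "t < length cs" for t
      using that
    proof (induction t)
      case (Suc t) thus ?case using step[of t] by simp
    qed simp
    have "hd cs = last cs" using cyc by (simp add: is_cycle_def)
    moreover have "cs \<noteq> []" using len by auto
    hence "hd cs = cs ! 0" "last cs = cs ! (length cs - 1)" by (simp_all add: hd_conv_nth last_conv_nth)
    ultimately have "cs ! (length cs - 1) = cs ! 0" by simp
    moreover have "\<mu> (cs ! (length cs - 1)) + (length cs - 1) \<le> \<mu> (cs ! 0)" using acc[of "length cs - 1"] len by simp
    ultimately show False using len by simp
  qed
qed

lemma wp_chain:
  assumes j: "j \<in> S" and k: "k < length (beta j) - 1"
  shows "wp (wt (Lcon G S beta)) (chain beta j k) = 1"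
  using k
proof (induction k)
  case (Suc k)
  thus ?case using W_chain[OF wf st0 mbc j Suc.prems] by (simp add: chain_Suc wp_Cons)
qed simp

lemma Lpath_weight:
  assumes j: "j \<in> S" and k: "k < length (beta j) - 1"
  shows "path_weight (Lcon G S beta) (Inl i # chain beta j k) = wt (Lcon G S beta) (Inl i) (Lnode beta j k) / lam ^ k"
proof -
  define xs where "xs = map (Lnode beta j) (rev [1..<Suc k])"
  have eq: "Inl i # chain beta j k = Inl i # xs @ [Inl j]" by (simp add: xs_def chain_split)
  have lp: "\<forall>x\<in>set xs. wt (Lcon G S beta) x x = 0"
  proof
    fix x assume "x \<in> set xs"
    then obtain t where "1 \<le> t" "t \<le> k" "x = Lnode beta j t" by (auto simp: xs_def)
    hence "x = Inr (j, t)" using k by (simp add: Lnode_def)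
    thus "wt (Lcon G S beta) x x = 0" using Inr_noloop by (simp add: Lcon_wt)
  qed
  have "path_weight (Lcon G S beta) (Inl i # chain beta j k) = wp (wt (Lcon G S beta)) (Inl i # chain beta j k) / lam ^ k"
  proof -
    have lx: "length xs = k" by (simp add: xs_def)
    show ?thesis unfolding eq path_weight_eq[OF lp] lx ..
  qed
  also have "wp (wt (Lcon G S beta)) (Inl i # chain beta j k) = wt (Lcon G S beta) (Inl i) (Lnode beta j k)"
    using wp_chain[OF j k] by (simp add: wp_Cons)
  finally show ?thesis .
qed

lemma Lsum:
  assumes i: "i \<in> S" and j: "j \<in> S"
  shows "(\<Sum>us \<in> branches (Lcon G S beta) (Inl ` S) (Inl i) (Inl j). path_weight (Lcon G S beta) us)
       = (\<Sum>\<gamma> \<in> branches G S i j. path_weight G \<gamma>)"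
proof -
  define K where "K = {k. k < length (beta j) - 1 \<and> (Inl i, Lnode beta j k) \<in> LA G S beta}"
  define B where "B = branches G S i j"
  have finB: "finite B" unfolding B_def by (rule finite_branches[OF wf st0 mbc i j])
  have "(\<Sum>us \<in> branches (Lcon G S beta) (Inl ` S) (Inl i) (Inl j). path_weight (Lcon G S beta) us)
      = (\<Sum>k \<in> K. path_weight (Lcon G S beta) (Inl i # chain beta j k))"
    unfolding Lbranches[OF wf st0 mbc i j] K_def[symmetric]
  proof (rule sum.reindex[unfolded comp_def])
    show "inj_on (\<lambda>k. Inl i # chain beta j k) K"
    proof (rule inj_onI)
      fix a b assume "Inl i # chain beta j a = Inl i # chain beta j b"
      hence "length (chain beta j a) = length (chain beta j b)" by simp
      thus "a = b" by simp
    qed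
  qed
  also have "\<dots> = (\<Sum>k \<in> K. \<Sum>\<gamma> \<in> {\<gamma> \<in> B. length \<gamma> - 2 = k}. path_weight G \<gamma>)"
  proof (intro sum.cong refl)
    fix k assume "k \<in> K"
    hence k: "k < length (beta j) - 1" by (simp add: K_def)
    show "path_weight (Lcon G S beta) (Inl i # chain beta j k) = (\<Sum>\<gamma> \<in> {\<gamma> \<in> B. length \<gamma> - 2 = k}. path_weight G \<gamma>)"
      unfolding Lpath_weight[OF j k] W_Inl[OF wf st0 mbc i j k] B_def
      unfolding sum_distrib_left[symmetric] using lam_nz by simp
  qed
  also have "\<dots> = (\<Sum>k \<in> {0..<length (beta j) - 1}. \<Sum>\<gamma> \<in> {\<gamma> \<in> B. length \<gamma> - 2 = k}. path_weight G \<gamma>)"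
  proof (rule sum.mono_neutral_left)
    show "K \<subseteq> {0..<length (beta j) - 1}" by (auto simp: K_def)
    show "\<forall>k\<in>{0..<length (beta j) - 1} - K. (\<Sum>\<gamma> \<in> {\<gamma> \<in> B. length \<gamma> - 2 = k}. path_weight G \<gamma>) = 0"
    proof
      fix k assume "k \<in> {0..<length (beta j) - 1} - K"
      hence e: "{\<gamma> \<in> B. length \<gamma> - 2 = k} = {}" using arc_Inl_iff[OF wf st0 mbc i j, of k] by (auto simp: K_def B_def)
      show "(\<Sum>\<gamma> \<in> {\<gamma> \<in> B. length \<gamma> - 2 = k}. path_weight G \<gamma>) = 0" by (subst e) simp
    qed
  qed simp
  also have "\<dots> = (\<Sum>\<gamma> \<in> B. path_weight G \<gamma>)"
  proof (rule sum.group[OF finB])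
    show "finite {0..<length (beta j) - 1}" by simp
    show "(\<lambda>\<gamma>. length \<gamma> - 2) ` B \<subseteq> {0..<length (beta j) - 1}"
    proof
      fix n assume "n \<in> (\<lambda>\<gamma>. length \<gamma> - 2) ` B"
      then obtain \<gamma> where g: "\<gamma> \<in> B" "n = length \<gamma> - 2" by auto
      have "length \<gamma> \<le> length (beta j)" using branch_max[OF wf st0 mbc i j] g by (auto simp: B_def)
      moreover have "2 \<le> length \<gamma>" using g branch_len[OF wf st0 mbc] by (auto simp: B_def)
      ultimately show "n \<in> {0..<length (beta j) - 1}" using g by simp
    qed
  qed
  finally show ?thesis unfolding B_def .
qed

lemma Lnonempty:
  assumes i: "i \<in> S" and j: "j \<in> S"
  shows "(branches (Lcon G S beta) (Inl ` S) (Inl i) (Inl j) \<noteq> {}) = (branches G S i j \<noteq> {})"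
proof -
  have "(branches (Lcon G S beta) (Inl ` S) (Inl i) (Inl j) \<noteq> {}) =
        (\<exists>k < length (beta j) - 1. (Inl i, Lnode beta j k) \<in> LA G S beta)"
    unfolding Lbranches[OF wf st0 mbc i j] by auto
  also have "\<dots> = (\<exists>k < length (beta j) - 1. \<exists>\<gamma>\<in>branches G S i j. length \<gamma> - 2 = k)"
    using arc_Inl_iff[OF wf st0 mbc i j] by auto
  also have "\<dots> = (branches G S i j \<noteq> {})"
  proof
    assume "branches G S i j \<noteq> {}"
    then obtain \<gamma> where g: "\<gamma> \<in> branches G S i j" by blast
    have "length \<gamma> \<le> length (beta j)" using branch_max[OF wf st0 mbc i j] g by auto
    moreover have "2 \<le> length \<gamma>" using g branch_len[OF wf st0 mbc] by auto
    ultimately show "\<exists>k < length (beta j) - 1. \<exists>\<gamma>\<in>branches G S i j. length \<gamma> - 2 = k" using g by force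
  qed auto
  finally show ?thesis .
qed

lemma isored_equal: "isored (Lcon G S beta) (Inl ` S) = isored (lift_graph G) (Inl ` S)"
proof (rule isored_eqI)
  fix x y :: "'v + 'v \<times> nat" assume "x \<in> Inl ` S" "y \<in> Inl ` S"
  then obtain i j where ij: "i \<in> S" "j \<in> S" "x = Inl i" "y = Inl j" by auto
  show "(branches (Lcon G S beta) (Inl ` S) x y \<noteq> {}) = (branches (lift_graph G) (Inl ` S) x y \<noteq> {})"
    using Lnonempty[OF ij(1,2)] by (simp add: ij lift_branches)
  have "(\<Sum>\<beta> \<in> branches (lift_graph G) (Inl ` S) x y. path_weight (lift_graph G) \<beta>)
      = (\<Sum>\<gamma> \<in> branches G S i j. path_weight (lift_graph G) (map Inl \<gamma>))"
    unfolding ij lift_branches by (rule sum.reindex[unfolded comp_def]) (auto simp: inj_on_def)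
  also have "\<dots> = (\<Sum>\<gamma> \<in> branches G S i j. path_weight G \<gamma>)"
    by (intro sum.cong refl lift_path_weight) (auto dest: branch_len[OF wf st0 mbc])
  finally show "(\<Sum>\<beta> \<in> branches (Lcon G S beta) (Inl ` S) x y. path_weight (Lcon G S beta) \<beta>) =
      (\<Sum>\<beta> \<in> branches (lift_graph G) (Inl ` S) x y. path_weight (lift_graph G) \<beta>)"
    using Lsum[OF ij(1,2)] by (simp add: ij)
qed

lemma branch_U:
  assumes U: "unital_subring U" "weight_set G \<subseteq> U" and g: "\<gamma> \<in> branches G S i j"
  shows "lam ^ (length \<gamma> - 2) * path_weight G \<gamma> \<in> U"
proof -
  have ij: "i \<in> S" "j \<in> S" using g by (auto simp: branches_def)
  from g obtain xs where xs: "xs \<in> dls (verts G - S)" "consec_edges G (i # xs @ [j])" and eq: "\<gamma> = i # xs @ [j]"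
    unfolding branches_char[OF SV[OF wf st0 mbc] ij] by auto
  have lp: "\<forall>x\<in>set xs. wt G x x = 0" using xs st0 by (auto simp: dls_def st0_def)
  have "lam ^ (length \<gamma> - 2) * path_weight G \<gamma> = wp (wt G) \<gamma>"
    unfolding eq path_weight_eq[OF lp] using lam_nz by simp
  thus ?thesis using wp_U[OF U xs(2)] eq by simp
qed

lemma Lcon_weight_set:
  assumes U: "unital_subring U" "weight_set G \<subseteq> U"
  shows "weight_set (Lcon G S beta) \<subseteq> U"
proof
  fix c assume "c \<in> weight_set (Lcon G S beta)"
  then obtain x y where xy: "(x, y) \<in> LA G S beta" "c = LW1 G S beta x y + LW2 G S beta x y"
    by (auto simp: weight_set_def Lcon_arcs Lcon_wt)
  have one: "1 \<in> U" using U by (simp add: unital_subring_def)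
  have "LW1 G S beta x y \<in> U"
    unfolding LW1_def
  proof (intro U_sum[OF U(1)])
    fix j k assume j: "j \<in> S"
    have "lam ^ (length (beta j) - 2) * path_weight G (beta j) \<in> U"
      using branch_U[OF U] beta_branch[OF wf st0 mbc j] by blast
    thus "(if x = Lnode beta j (Suc k) \<and> y = Lnode beta j k
                  then (if Suc k = length (beta j) - 1
                        then lam ^ (length (beta j) - 2) * path_weight G (beta j) else 1)
                  else 0) \<in> U" using one U0[OF U(1)] by auto
  qed
  moreover have "LW2 G S beta x y \<in> U"
    unfolding LW2_def
  proof (intro U_sum[OF U(1)])
    fix j i \<gamma> assume "\<gamma> \<in> branches G S i j - {beta j}"
    hence "lam ^ (length \<gamma> - 2) * path_weight G \<gamma> \<in> U" using branch_U[OF U] by blast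
    thus "(if x = Inl i \<and> y = Lnode beta j (length \<gamma> - 2)
                  then lam ^ (length \<gamma> - 2) * path_weight G \<gamma> else 0) \<in> U" using U0[OF U(1)] by auto
  qed
  ultimately show "c \<in> U" using xy U(1) by (simp add: unital_subring_def)
qed

end


lemma to_fract_power: "to_fract (x ^ n) = to_fract x ^ n"
  by (induction n) simp_all

lemma roots_mset_count: "q \<noteq> 0 \<Longrightarrow> count (roots_mset q) x = order x q"
proof -
  assume q: "q \<noteq> 0"
  have fin: "finite {y. poly q y = 0}" using poly_roots_finite[OF q] by simp
  have "count (roots_mset q) x = (\<Sum>y \<in> {y. poly q y = 0}. if y = x then order y q else 0)"
    unfolding roots_mset_def count_sum by (intro sum.cong refl) auto
  also have "\<dots> = (if x \<in> {y. poly q y = 0} then order x q else 0)"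
    using fin by (simp add: sum.delta')
  also have "\<dots> = order x q" using order_0I[of q x] by auto
  finally show ?thesis .
qed

lemma roots_mset_0: "roots_mset 0 = {#}"
proof -
  have "infinite {y :: complex. poly 0 y = 0}" by (simp add: infinite_UNIV_char_0)
  thus ?thesis unfolding roots_mset_def by simp
qed

lemma no_common_root:
  assumes "coprime a b" "poly a x = 0" "poly b x = 0"
  shows False
proof -
  have "[:- x, 1:] dvd a" "[:- x, 1:] dvd b" using assms poly_eq_0_iff_dvd by blast+
  hence "is_unit [:- x, 1:]" using coprime_common_divisor assms(1) by blast
  thus False by (simp add: is_unit_poly_iff)
qed

lemma order_num:
  fixes g :: rf and p :: "complex poly"
  assumes p: "p \<noteq> 0" and px: "poly p x \<noteq> 0" and g: "g \<noteq> 0"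
  shows "order x (fst (quot_of_fract (to_fract p * g))) = order x (fst (quot_of_fract g))"
proof -
  define f where "f = to_fract p * g"
  obtain n d where nd: "quot_of_fract g = (n, d)" by (cases "quot_of_fract g")
  obtain n' d' where nd': "quot_of_fract f = (n', d')" by (cases "quot_of_fract f")
  have d: "d \<noteq> 0" and d': "d' \<noteq> 0" using snd_quot_of_fract_nonzero nd nd' by (metis snd_conv)+
  have f0: "f \<noteq> 0" using p g by (simp add: f_def)
  have n: "n \<noteq> 0" and n': "n' \<noteq> 0" using fst_quot_of_fract_eq_0_iff g f0 nd nd' by (metis fst_conv)+
  have cop: "coprime n d" "coprime n' d'" using coprime_quot_of_fract nd nd' by (metis fst_conv snd_conv)+
  have gF: "g = Fract n d" using Fract_quot_of_fract[of g] nd by simp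
  have fF: "f = Fract n' d'" using Fract_quot_of_fract[of f] nd' by simp
  have "Fract n' d' = Fract (p * n) d" using fF gF by (simp add: f_def to_fract_def)
  hence eq: "n' * d = p * n * d'" using eq_fract(1)[OF d' d] by simp
  have "order x (n' * d) = order x n' + order x d" using n' d by (simp add: order_mult)
  moreover have "order x (p * n * d') = order x p + order x n + order x d'" using p n d' by (simp add: order_mult)
  moreover have "order x p = 0" using px by (rule order_0I)
  ultimately have sumeq: "order x n' + order x d = order x n + order x d'" using eq by simp
  have c1: "order x n = 0 \<or> order x d = 0"
    using no_common_root[OF cop(1), of x] order_gt_0_iff[OF n] order_gt_0_iff[OF d] by auto
  have c2: "order x n' = 0 \<or> order x d' = 0"
    using no_common_root[OF cop(2), of x] order_gt_0_iff[OF n'] order_gt_0_iff[OF d'] by auto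
  from sumeq c1 c2 have "order x n' = order x n" by auto
  thus ?thesis using nd nd' by (simp add: f_def)
qed

lemma lam_pow: "(- lam) ^ a = to_fract ((- [:0, 1:]) ^ a)"
  by (simp only: lam_def to_fract_power to_fract_uminus)

lemma nz_count:
  fixes X :: rf
  assumes x: "x \<noteq> 0"
  shows "count (roots_mset (fst (quot_of_fract ((- lam) ^ a * X)))) x = count (roots_mset (fst (quot_of_fract X))) x"
proof (cases "X = 0")
  case True thus ?thesis by simp
next
  case False
  define p :: "complex poly" where "p = (- [:0, 1:]) ^ a"
  have p: "p \<noteq> 0" by (simp add: p_def)
  have px: "poly p x \<noteq> 0" using x by (simp add: p_def)
  have ne: "(- lam) ^ a * X \<noteq> 0" using False lam_nz by simp
  show ?thesis
    unfolding lam_pow p_def[symmetric]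
    using order_num[OF p px False] ne False lam_pow p_def
    by (subst roots_mset_count, simp, subst roots_mset_count, simp_all)
qed

lemma nz_spec_eq:
  assumes "char_det H1 = (- lam) ^ a * X" "char_det H2 = (- lam) ^ b * X"
  shows "nonzero_spectrum H1 = nonzero_spectrum H2"
  unfolding nonzero_spectrum_def spectrum_graph_def assms
  by (rule multiset_eqI) (simp add: nz_count)



theorem theorem6:
  fixes G :: "'v graph" and U :: "rf set" and S :: "'v set" and beta :: "'v \<Rightarrow> 'v list"
  assumes "wf_graph G"
    and "unital_subring U"
    and "weight_set G \<subseteq> U"
    and "st0 G S"
    and "\<forall>v \<in> verts G. \<exists>\<beta> \<in> all_branches G S. v \<in> set \<beta>"
    and "max_branch_choice G S beta"
  shows "spec_equiv (lift_graph G) (Lcon G S beta)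
       \<and> nonzero_spectrum (lift_graph G) = nonzero_spectrum (Lcon G S beta)
       \<and> (card (verts G) > card S + (\<Sum>j \<in> S. length (beta j) - 2)
            \<longrightarrow> is_reduction U (lift_graph G) (Lcon G S beta))
       \<and> (\<not> card (verts G) > card S + (\<Sum>j \<in> S. length (beta j) - 2)
            \<longrightarrow> is_expansion U (lift_graph G) (Lcon G S beta))"
proof -
  note wf = assms(1) and st0 = assms(4) and mbc = assms(6)
  have stS: "st G S" using st0 by (simp add: st0_def)
  have stH: "st (lift_graph G) (Inl ` S)" by (rule lift_st[OF stS])
  have stL: "st (Lcon G S beta) (Inl ` S)" by (rule Lcon_st[OF wf st0 mbc])
  have iso: "isored (lift_graph G) (Inl ` S) = isored (Lcon G S beta) (Inl ` S)"
    using isored_equal[OF wf st0 mbc] by simp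
  have se: "spec_equiv (lift_graph G) (Lcon G S beta)"
    unfolding spec_equiv_def using stH stL iso by blast
  have finH: "finite (verts (lift_graph G))" using finV[OF wf st0 mbc] by simp
  have loopH: "\<forall>x\<in>verts (lift_graph G) - Inl ` S. wt (lift_graph G) x x = 0"
    using st0 by (auto simp: st0_def)
  have cH: "char_det (lift_graph G) = (- lam) ^ card (verts (lift_graph G) - Inl ` S) * char_det (isored (lift_graph G) (Inl ` S))"
    by (rule char_det_red[OF finH stH loopH lift_wf[OF wf]])
  have cL: "char_det (Lcon G S beta) = (- lam) ^ card (verts (Lcon G S beta) - Inl ` S) * char_det (isored (lift_graph G) (Inl ` S))"
    unfolding iso
    by (rule char_det_red[OF Lcon_fin[OF wf st0 mbc] stL]) (use Lcon_loop[OF wf st0 mbc] Lcon_arc[OF wf st0 mbc] in auto)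
  have ns: "nonzero_spectrum (lift_graph G) = nonzero_spectrum (Lcon G S beta)"
    by (rule nz_spec_eq[OF cH cL])
  have wH: "weight_set (lift_graph G) \<subseteq> U" using assms(3) by (simp add: lift_weight_set)
  have wL: "weight_set (Lcon G S beta) \<subseteq> U" by (rule Lcon_weight_set[OF wf st0 mbc assms(2,3)])
  have cards: "card (verts (lift_graph G)) = card (verts G)"
    "card (verts (Lcon G S beta)) = card S + (\<Sum>j \<in> S. length (beta j) - 2)"
    using lift_card Lcon_card[OF wf st0 mbc] by auto
  show ?thesis
    using se ns wH wL cards unfolding is_reduction_def is_expansion_def by auto
qed


end
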